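(* Let $K$ be a number field and $G\subseteq K^*$ a subgroup. Then there exists a unique subring $S\subseteq K$, minimal with respect to inclusion, such that for every finite non-empty subset $Y\subseteq G$ the $S$-submodule $SY$ of $K$ generated by $Y$ is an invertible ideal of $S$ within $K$. Moreover, this $S$ is an order.
   Context: For a subring $S$ of a field $K$, an invertible ideal of $S$ within $K$ is an $S$-submodule $I\subseteq K$ for which there exists an $S$-submodule $J\subseteq K$ with $IJ=S$ ($IJ$ the set of finite sums of products). An order is a domain whose additive group is isomorphic to $\mathbb{Z}^n$ for some $n\ge0$. *)

theory Defs
  imports Main "HOL.Rat"
begin

text \<open>The number field K is modelled as a type 'a of characteristic 0 which is
  finite-dimensional as a vector space over the rationals (embedded via of_rat).\<close>
definition number_field :: "'a::field_char_0 itself \<Rightarrow> bool" where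
  "number_field (T::'a itself) \<longleftrightarrow>
     (\<exists>B::'a set. finite B \<and> (\<forall>x::'a. \<exists>q. x = (\<Sum>b\<in>B. of_rat (q b) * b)))"

definition mult_subgroup :: "'a::field set \<Rightarrow> bool" where
  "mult_subgroup G \<longleftrightarrow> G \<subseteq> - {0} \<and> 1 \<in> G \<and>
     (\<forall>x\<in>G. \<forall>y\<in>G. x * y \<in> G) \<and> (\<forall>x\<in>G. inverse x \<in> G)"

definition is_subring :: "'a::field set \<Rightarrow> bool" where
  "is_subring S \<longleftrightarrow> 0 \<in> S \<and> 1 \<in> S \<and>
     (\<forall>x\<in>S. \<forall>y\<in>S. x + y \<in> S \<and> x * y \<in> S) \<and> (\<forall>x\<in>S. - x \<in> S)"

definition is_submodule :: "'a::field set \<Rightarrow> 'a set \<Rightarrow> bool" where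
  "is_submodule S I \<longleftrightarrow> 0 \<in> I \<and> (\<forall>x\<in>I. \<forall>y\<in>I. x + y \<in> I) \<and>
     (\<forall>s\<in>S. \<forall>x\<in>I. s * x \<in> I)"

definition gen_module :: "'a::field set \<Rightarrow> 'a set \<Rightarrow> 'a set" where
  "gen_module S Y = {\<Sum>y\<in>Y. s y * y | s. \<forall>y\<in>Y. s y \<in> S}"

definition ideal_mult :: "'a::field set \<Rightarrow> 'a set \<Rightarrow> 'a set" where
  "ideal_mult I J = {\<Sum>i<n. a i * b i | (n::nat) a b. \<forall>i<n. a i \<in> I \<and> b i \<in> J}"

definition invertible_ideal :: "'a::field set \<Rightarrow> 'a set \<Rightarrow> bool" where
  "invertible_ideal S I \<longleftrightarrow> is_submodule S I \<and>
     (\<exists>J. is_submodule S J \<and> ideal_mult I J = S)"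

text \<open>An order: a domain whose additive group is isomorphic to Z^n. A subring of a
  field is automatically a domain; the additive group is free abelian of rank n
  iff it has a Z-basis b_0..b_{n-1}.\<close>
definition is_order :: "'a::field set \<Rightarrow> bool" where
  "is_order S \<longleftrightarrow> is_subring S \<and>
     (\<exists>n b. (\<forall>i<n. b i \<in> S) \<and>
        (\<forall>x\<in>S. \<exists>!c::nat \<Rightarrow> int. (\<forall>i\<ge>n. c i = 0) \<and> x = (\<Sum>i<n. of_int (c i) * b i)))"

end

theory Submission
  imports Defs "HOL.Vector_Spaces"
begin


definition addsub :: "'a::ab_group_add set \<Rightarrow> bool" where
  "addsub H \<longleftrightarrow> 0 \<in> H \<and> (\<forall>x\<in>H. \<forall>y\<in>H. x + y \<in> H) \<and> (\<forall>x\<in>H. - x \<in> H)"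

definition zlin :: "(nat \<Rightarrow> int) \<Rightarrow> (nat \<Rightarrow> 'a::ring_1) \<Rightarrow> nat \<Rightarrow> 'a" where
  "zlin z e m = (\<Sum>i<m. of_int (z i) * e i)"

definition zindep :: "(nat \<Rightarrow> 'a::ring_1) \<Rightarrow> nat \<Rightarrow> bool" where
  "zindep e m \<longleftrightarrow> (\<forall>z. zlin z e m = 0 \<longrightarrow> (\<forall>i<m. z i = 0))"

lemma addsub_diff: "addsub H \<Longrightarrow> x \<in> H \<Longrightarrow> y \<in> H \<Longrightarrow> x - y \<in> H"
  unfolding addsub_def by (metis diff_conv_add_uminus)

lemma addsub_nat_mult: "addsub H \<Longrightarrow> x \<in> H \<Longrightarrow> of_nat k * (x::'a::ring_1) \<in> H"
  by (induction k) (auto simp: addsub_def distrib_right)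

lemma addsub_int_mult: "addsub H \<Longrightarrow> x \<in> H \<Longrightarrow> of_int k * (x::'a::ring_1) \<in> H"
proof (cases "k \<ge> 0")
  case True
  assume "addsub H" "x \<in> H"
  then have "of_nat (nat k) * x \<in> H" by (rule addsub_nat_mult)
  then show ?thesis using True by simp
next
  case False
  assume a: "addsub H" "x \<in> H"
  then have "of_nat (nat (-k)) * x \<in> H" by (rule addsub_nat_mult)
  then have "- (of_nat (nat (-k)) * x) \<in> H" using a unfolding addsub_def by blast
  then show ?thesis using False by simp
qed

lemma int_subgroup:
  fixes A :: "int set"
  assumes "addsub A" "A \<noteq> {0}"
  shows "\<exists>d>0. d \<in> A \<and> (\<forall>a\<in>A. d dvd a)"
proof -
  obtain a where a: "a \<in> A" "a \<noteq> 0" using assms unfolding addsub_def by blast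
  have ex: "\<exists>k::nat. k > 0 \<and> int k \<in> A"
  proof (cases "a > 0")
    case True then show ?thesis using a by (intro exI[of _ "nat a"]) auto
  next
    case False
    then have "-a \<in> A" "-a > 0" using a assms(1) unfolding addsub_def by auto
    then show ?thesis by (intro exI[of _ "nat (-a)"]) auto
  qed
  define k where "k = (LEAST k::nat. k > 0 \<and> int k \<in> A)"
  have k: "k > 0" "int k \<in> A" using LeastI_ex[OF ex] unfolding k_def by auto
  have kmin: "k \<le> j" if "j > 0" "int j \<in> A" for j :: nat
    unfolding k_def by (rule Least_le) (use that in auto)
  have "\<forall>b\<in>A. int k dvd b"
  proof
    fix b assume b: "b \<in> A"
    have "of_int (b div int k) * int k \<in> A" by (rule addsub_int_mult[OF assms(1) k(2)])
    then have "b - (b div int k) * int k \<in> A" using addsub_diff[OF assms(1) b] by simp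
    moreover have "b - (b div int k) * int k = b mod int k" by (rule minus_div_mult_eq_mod)
    ultimately have m: "b mod int k \<in> A" by simp
    have m0: "b mod int k \<ge> 0" "b mod int k < int k" using k(1) by auto
    show "int k dvd b"
    proof (rule ccontr)
      assume "\<not> int k dvd b"
      then have "b mod int k \<noteq> 0" by (simp add: dvd_eq_mod_eq_0)
      then have pos: "nat (b mod int k) > 0" using m0 by simp
      have "k \<le> nat (b mod int k)" by (rule kmin[OF pos]) (use m m0 in simp)
      then show False using m0 by simp
    qed
  qed
  then show ?thesis using k by (intro exI[of _ "int k"]) auto
qed

lemma zlin_Suc: "zlin z e (Suc m) = zlin z e m + of_int (z m) * e m"
  unfolding zlin_def by simp

lemma zlin_add: "zlin (\<lambda>i. z i + z' i) e m = zlin z e m + zlin z' e m"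
  unfolding zlin_def by (simp add: distrib_right sum.distrib)

lemma zlin_neg: "zlin (\<lambda>i. - z i) e m = - zlin z e m"
  unfolding zlin_def by (simp add: sum_negf)

lemma zlin_diff: "zlin (\<lambda>i. z i - z' i) e m = zlin z e m - zlin z' e m"
  unfolding zlin_def by (simp add: left_diff_distrib sum_subtractf)

lemma zlin_smult: "zlin (\<lambda>i. t * z i) e m = of_int t * zlin z e m"
  unfolding zlin_def by (simp add: sum_distrib_left mult.assoc)

lemma zlin_cong: "(\<And>i. i < m \<Longrightarrow> z i = z' i) \<Longrightarrow> (\<And>i. i < m \<Longrightarrow> e i = e' i) \<Longrightarrow> zlin z e m = zlin z' e' m"
  unfolding zlin_def by (rule sum.cong) auto

lemma zindep_unique:
  assumes "zindep e m" "zlin z e m = zlin z' e m" "i < m"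
  shows "z i = z' i"
proof -
  have "zlin (\<lambda>i. z i - z' i) e m = 0" using assms(2) by (simp add: zlin_diff)
  then show ?thesis using assms(1,3) unfolding zindep_def by fastforce
qed

definition cf :: "(nat \<Rightarrow> 'a::ring_1) \<Rightarrow> nat \<Rightarrow> 'a \<Rightarrow> nat \<Rightarrow> int" where
  "cf c N x = (SOME z. x = zlin z c N)"

lemma cf_zlin: "zindep c N \<Longrightarrow> i < N \<Longrightarrow> cf c N (zlin z c N) i = z i"
  unfolding cf_def by (rule zindep_unique, assumption, rule someI_ex[of "\<lambda>z'. zlin z c N = zlin z' c N", symmetric]) auto

lemma zindep_Suc: "zindep c (Suc n) \<Longrightarrow> zindep c n"
  unfolding zindep_def
proof (intro allI impI)
  fix z i assume a: "\<forall>z. zlin z c (Suc n) = 0 \<longrightarrow> (\<forall>i<Suc n. z i = 0)" "zlin z c n = 0" "i < n"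
  have "zlin (z(n := 0)) c (Suc n) = 0"
    using a(2) by (simp add: zlin_Suc zlin_cong[of n "z(n:=0)" z c c])
  then show "z i = 0" using a(1) a(3) by (metis fun_upd_apply less_SucI nat_neq_iff)
qed

lemma subgroup_free:
  fixes c :: "nat \<Rightarrow> 'a::field_char_0"
  assumes "zindep c n" "addsub H" "H \<subseteq> range (\<lambda>z. zlin z c n)"
  shows "\<exists>m e. (\<forall>i<m. e i \<in> H) \<and> zindep e m \<and> H \<subseteq> range (\<lambda>z. zlin z e m)"
  using assms
proof (induction n arbitrary: H)
  case 0
  then have "H \<subseteq> {0}" by (auto simp: zlin_def)
  then show ?case by (intro exI[of _ 0]) (auto simp: zindep_def zlin_def)
next
  case (Suc n)
  have ind: "zindep c (Suc n)" by fact
  let ?p = "\<lambda>x. cf c (Suc n) x n"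
  have p_zlin: "?p (zlin z c (Suc n)) = z n" for z using cf_zlin[OF ind] by simp
  have p_add: "?p (x + y) = ?p x + ?p y" if xy: "x \<in> H" "y \<in> H" for x y
  proof -
    obtain z z' where "x = zlin z c (Suc n)" "y = zlin z' c (Suc n)" using xy Suc.prems(3) by blast
    then show ?thesis by (simp add: zlin_add[symmetric] p_zlin)
  qed
  have p_smult: "?p (of_int t * x) = t * ?p x" if xH: "x \<in> H" for x t
  proof -
    obtain z where "x = zlin z c (Suc n)" using xH Suc.prems(3) by blast
    then show ?thesis by (simp add: zlin_smult[symmetric] p_zlin)
  qed
  have p_neg: "?p (- x) = - ?p x" if "x \<in> H" for x
    using p_smult[OF that, of "-1"] by simp
  have p0: "?p 0 = 0" using p_zlin[of "\<lambda>_. 0"] by (simp add: zlin_def)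
  define H0 where "H0 = {x\<in>H. ?p x = 0}"
  have H0sub: "addsub H0" using Suc.prems(2) p_add p_neg p0 unfolding addsub_def H0_def by auto
  have H0span: "H0 \<subseteq> range (\<lambda>z. zlin z c n)"
  proof
    fix x assume "x \<in> H0"
    then obtain z where z: "x = zlin z c (Suc n)" "?p x = 0" using Suc.prems(3) unfolding H0_def by blast
    then have "z n = 0" using p_zlin by simp
    then show "x \<in> range (\<lambda>z. zlin z c n)" using z by (simp add: zlin_Suc)
  qed
  obtain m0 e0 where e0: "\<forall>i<m0. e0 i \<in> H0" "zindep e0 m0" "H0 \<subseteq> range (\<lambda>z. zlin z e0 m0)"
    using Suc.IH[OF zindep_Suc[OF ind] H0sub H0span] by blast
  have P: "addsub (?p ` H)" unfolding addsub_def
  proof (intro conjI ballI)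
    show "0 \<in> ?p ` H" using Suc.prems(2) p0 unfolding addsub_def by (metis image_eqI)
  next
    fix a b assume "a \<in> ?p ` H" "b \<in> ?p ` H"
    then obtain x y where "x \<in> H" "y \<in> H" "a = ?p x" "b = ?p y" by blast
    then show "a + b \<in> ?p ` H" using p_add Suc.prems(2) unfolding addsub_def by (metis image_eqI)
  next
    fix a assume "a \<in> ?p ` H"
    then obtain x where "x \<in> H" "a = ?p x" by blast
    then show "- a \<in> ?p ` H" using p_neg Suc.prems(2) unfolding addsub_def by (metis image_eqI)
  qed
  show ?case
  proof (cases "?p ` H = {0}")
    case True
    then have "H0 = H" unfolding H0_def by auto
    then show ?thesis using e0 by auto
  next
    case False
    obtain d where d: "d > 0" "d \<in> ?p ` H" "\<forall>a\<in>?p ` H. d dvd a" using int_subgroup[OF P False] by blast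
    obtain h where h: "h \<in> H" "?p h = d" using d(2) by blast
    define e where "e = e0(m0 := h)"
    have zHm: "zlin z e0 m \<in> H" if "m \<le> m0" for z m
      using that
    proof (induction m)
      case 0 then show ?case using Suc.prems(2)[unfolded addsub_def] by (simp add: zlin_def)
    next
      case (Suc m)
      have "e0 m \<in> H" using e0(1) Suc.prems unfolding H0_def by auto
      then have "of_int (z m) * e0 m \<in> H" using addsub_int_mult[OF \<open>addsub H\<close>] by blast
      moreover have "zlin z e0 m \<in> H" using Suc by simp
      ultimately show ?case using \<open>addsub H\<close> unfolding addsub_def by (simp add: zlin_Suc)
    qed
    have zH: "zlin z e0 m0 \<in> H" for z using zHm by simp
    have pe0: "?p (zlin z e0 m) = 0" if "m \<le> m0" for z m
      using that
    proof (induction m)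
      case 0 then show ?case using p0 by (simp add: zlin_def)
    next
      case (Suc m)
      have em: "e0 m \<in> H" "?p (e0 m) = 0" using e0(1) Suc.prems unfolding H0_def by auto
      have "?p (zlin z e0 (Suc m)) = ?p (zlin z e0 m) + ?p (of_int (z m) * e0 m)"
        unfolding zlin_Suc by (rule p_add[OF zHm addsub_int_mult[OF \<open>addsub H\<close> em(1)]]) (use Suc.prems in simp)
      also have "\<dots> = 0" using Suc p_smult[OF em(1)] em(2) by simp
      finally show ?case .
    qed
    have ze: "zlin z e (Suc m0) = zlin z e0 m0 + of_int (z m0) * h" for z
    proof -
      have "zlin z e m0 = zlin z e0 m0" by (rule zlin_cong) (auto simp: e_def)
      then show ?thesis by (simp add: zlin_Suc e_def)
    qed
    show ?thesis
    proof (intro exI conjI)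
      show "\<forall>i<Suc m0. e i \<in> H" using e0(1) h(1) unfolding e_def H0_def by (auto simp: less_Suc_eq)
      show "zindep e (Suc m0)" unfolding zindep_def
      proof (intro allI impI)
        fix z i assume a: "zlin z e (Suc m0) = 0" "i < Suc m0"
        have "?p (zlin z e0 m0 + of_int (z m0) * h) = 0" using a(1) ze p0 by simp
        then have "z m0 * d = 0" using p_add[OF zH addsub_int_mult[OF \<open>addsub H\<close> h(1)]] p_smult[OF h(1)] pe0[of m0] h(2) by simp
        then have zm: "z m0 = 0" using d(1) by simp
        then have "zlin z e0 m0 = 0" using a(1) ze by simp
        then show "z i = 0" using e0(2) zm a(2) unfolding zindep_def by (auto simp: less_Suc_eq)
      qed
      show "H \<subseteq> range (\<lambda>z. zlin z e (Suc m0))"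
      proof
        fix x assume x: "x \<in> H"
        obtain t where t: "?p x = t * d" using d(3) x by (metis dvd_def image_eqI mult.commute)
        define y where "y = x - of_int t * h"
        have yH: "y \<in> H" unfolding y_def using addsub_diff[OF \<open>addsub H\<close> x addsub_int_mult[OF \<open>addsub H\<close> h(1)]] .
        have "?p y = 0"
        proof -
          have "x = y + of_int t * h" unfolding y_def by simp
          then have "?p x = ?p y + t * d" using p_add[OF yH addsub_int_mult[OF \<open>addsub H\<close> h(1)]] p_smult[OF h(1)] h(2) by simp
          then show ?thesis using t by simp
        qed
        then have "y \<in> H0" using yH unfolding H0_def by simp
        then obtain z0 where z0: "y = zlin z0 e0 m0" using e0(3) by blast
        have "x = zlin (z0(m0 := t)) e (Suc m0)"
          using ze[of "z0(m0 := t)"] z0 zlin_cong[of m0 "z0(m0 := t)" z0 e0 e0] unfolding y_def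
          by (simp add: algebra_simps)
        then show "x \<in> range (\<lambda>z. zlin z e (Suc m0))" by blast
      qed
    qed
  qed
qed



definition qlin :: "(nat \<Rightarrow> rat) \<Rightarrow> (nat \<Rightarrow> 'a::field_char_0) \<Rightarrow> nat \<Rightarrow> 'a" where
  "qlin q c n = (\<Sum>i<n. of_rat (q i) * c i)"

definition qbasis :: "(nat \<Rightarrow> 'a::field_char_0) \<Rightarrow> nat \<Rightarrow> bool" where
  "qbasis c n \<longleftrightarrow> (\<forall>x. \<exists>q. x = qlin q c n) \<and> (\<forall>q. qlin q c n = 0 \<longrightarrow> (\<forall>i<n. q i = 0))"

definition crd :: "(nat \<Rightarrow> 'a::field_char_0) \<Rightarrow> nat \<Rightarrow> 'a \<Rightarrow> nat \<Rightarrow> rat" where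
  "crd c n x = (SOME q. x = qlin q c n)"

lemma crd: "qbasis c n \<Longrightarrow> x = qlin (crd c n x) c n"
  unfolding crd_def qbasis_def by (metis (mono_tags) someI_ex)

lemma qlin_diff: "qlin (\<lambda>i. q i - q' i) c n = qlin q c n - qlin q' c n"
  unfolding qlin_def by (simp add: of_rat_diff left_diff_distrib sum_subtractf)

lemma qlin_cong: "(\<And>i. i < n \<Longrightarrow> q i = q' i) \<Longrightarrow> qlin q c n = qlin q' c n"
  unfolding qlin_def by (rule sum.cong) auto

lemma qbasis_unique: "qbasis c n \<Longrightarrow> qlin q c n = qlin q' c n \<Longrightarrow> i < n \<Longrightarrow> q i = q' i"
proof -
  assume a: "qbasis c n" "qlin q c n = qlin q' c n" "i < n"
  have "qlin (\<lambda>i. q i - q' i) c n = 0" using a(2) by (simp add: qlin_diff)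
  then show ?thesis using a(1,3) unfolding qbasis_def by fastforce
qed

lemma crd_unique: "qbasis c n \<Longrightarrow> x = qlin q c n \<Longrightarrow> i < n \<Longrightarrow> crd c n x i = q i"
proof -
  assume a: "qbasis c n" "x = qlin q c n" "i < n"
  have "qlin (crd c n x) c n = qlin q c n" using crd[OF a(1), of x] a(2) by simp
  then show ?thesis by (rule qbasis_unique[OF a(1) _ a(3)])
qed

lemma crd_lin:
  assumes "qbasis c n" "i < n" "finite A"
  shows "crd c n (\<Sum>j\<in>A. of_rat (r j) * u j) i = (\<Sum>j\<in>A. r j * crd c n (u j) i)"
proof (rule crd_unique[OF assms(1) _ assms(2)])
  have "(\<Sum>j\<in>A. of_rat (r j) * u j) = (\<Sum>j\<in>A. of_rat (r j) * (\<Sum>l<n. of_rat (crd c n (u j) l) * c l))"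
  proof (rule sum.cong[OF refl])
    fix j
    have e: "u j = (\<Sum>l<n. of_rat (crd c n (u j) l) * c l)" using crd[OF assms(1), of "u j"] unfolding qlin_def .
    show "of_rat (r j) * u j = of_rat (r j) * (\<Sum>l<n. of_rat (crd c n (u j) l) * c l)"
      by (simp only: e[symmetric])
  qed
  also have "\<dots> = (\<Sum>j\<in>A. \<Sum>l<n. of_rat (r j * crd c n (u j) l) * c l)"
    by (simp add: sum_distrib_left of_rat_mult mult.assoc)
  also have "\<dots> = (\<Sum>l<n. \<Sum>j\<in>A. of_rat (r j * crd c n (u j) l) * c l)"
    by (rule sum.swap)
  also have "\<dots> = qlin (\<lambda>l. \<Sum>j\<in>A. r j * crd c n (u j) l) c n"
    unfolding qlin_def by (simp add: of_rat_sum sum_distrib_right)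
  finally show "(\<Sum>j\<in>A. of_rat (r j) * u j) = qlin (\<lambda>l. \<Sum>j\<in>A. r j * crd c n (u j) l) c n" .
qed

lemma crd_add: "qbasis c n \<Longrightarrow> i < n \<Longrightarrow> crd c n (x + y) i = crd c n x i + crd c n y i"
  using crd_lin[of c n i "{0::nat,1}" "\<lambda>_. 1" "\<lambda>j. if j = 0 then x else y"] by simp

lemma crd_basis: "qbasis c n \<Longrightarrow> i < n \<Longrightarrow> j < n \<Longrightarrow> crd c n (c j) i = (if i = j then 1 else 0)"
proof (rule crd_unique)
  assume "j < n"
  show "c j = qlin (\<lambda>i. if i = j then 1 else 0) c n"
  proof -
    have "(\<lambda>i. of_rat (if i = j then 1 else 0) * c i) = (\<lambda>i. if i = j then c j else 0)" by auto
    then show ?thesis unfolding qlin_def using \<open>j < n\<close> by (simp only: sum.delta) simp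
  qed
qed

definition tr :: "(nat \<Rightarrow> 'a::field_char_0) \<Rightarrow> nat \<Rightarrow> 'a \<Rightarrow> rat" where
  "tr c n y = (\<Sum>i<n. crd c n (y * c i) i)"

lemma tr_lin:
  assumes "qbasis c n" "finite A"
  shows "tr c n (\<Sum>j\<in>A. of_rat (r j) * u j) = (\<Sum>j\<in>A. r j * tr c n (u j))"
proof -
  have "tr c n (\<Sum>j\<in>A. of_rat (r j) * u j) = (\<Sum>i<n. crd c n (\<Sum>j\<in>A. of_rat (r j) * (u j * c i)) i)"
    unfolding tr_def by (simp add: sum_distrib_right mult.assoc)
  also have "\<dots> = (\<Sum>i<n. \<Sum>j\<in>A. r j * crd c n (u j * c i) i)"
    by (rule sum.cong[OF refl]) (rule crd_lin[OF assms(1) _ assms(2)], auto)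
  also have "\<dots> = (\<Sum>j\<in>A. r j * tr c n (u j))"
    unfolding tr_def by (subst sum.swap) (simp add: sum_distrib_left)
  finally show ?thesis .
qed

lemma tr_one: "qbasis c n \<Longrightarrow> tr c n 1 = of_nat n"
  unfolding tr_def by (simp add: crd_basis)

lemma tr_invariant:
  assumes c: "qbasis c n" and e: "qbasis e m"
  shows "tr c n y = tr e m y"
proof -
  have "tr c n y = (\<Sum>i<n. crd c n (\<Sum>l<m. of_rat (crd e m (c i) l) * (y * e l)) i)"
    unfolding tr_def
  proof (rule sum.cong[OF refl])
    fix i assume "i \<in> {..<n}"
    have "y * c i = y * qlin (crd e m (c i)) e m" using crd[OF e] by metis
    also have "\<dots> = (\<Sum>l<m. of_rat (crd e m (c i) l) * (y * e l))"
      unfolding qlin_def by (simp add: sum_distrib_left mult.left_commute)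
    finally show "crd c n (y * c i) i = crd c n (\<Sum>l<m. of_rat (crd e m (c i) l) * (y * e l)) i" by simp
  qed
  also have "\<dots> = (\<Sum>i<n. \<Sum>l<m. crd e m (c i) l * crd c n (y * e l) i)"
    by (rule sum.cong[OF refl]) (rule crd_lin[OF c], auto)
  also have "\<dots> = (\<Sum>l<m. \<Sum>i<n. crd c n (y * e l) i * crd e m (c i) l)"
    by (subst sum.swap) (simp add: mult.commute)
  also have "\<dots> = (\<Sum>l<m. crd e m (\<Sum>i<n. of_rat (crd c n (y * e l) i) * c i) l)"
    by (rule sum.cong[OF refl], rule crd_lin[OF e, symmetric]) auto
  also have "\<dots> = tr e m y"
    unfolding tr_def
  proof (rule sum.cong[OF refl])
    fix l assume "l \<in> {..<m}"
    have "(\<Sum>i<n. of_rat (crd c n (y * e l) i) * c i) = y * e l"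
      using crd[OF c, of "y * e l"] unfolding qlin_def by simp
    then show "crd e m (\<Sum>i<n. of_rat (crd c n (y * e l) i) * c i) l = crd e m (y * e l) l" by simp
  qed
  finally show ?thesis .
qed



interpretation qv: vector_space "\<lambda>(r::rat) (x::'a::field_char_0). of_rat r * x"
  by unfold_locales (simp_all add: distrib_left distrib_right of_rat_add of_rat_mult mult.assoc)

lemma qbasis_span: "qbasis c n \<Longrightarrow> qv.span (c ` {..<n}) = UNIV"
proof -
  assume c: "qbasis c n"
  have "x \<in> qv.span (c ` {..<n})" for x
  proof -
    obtain q where "x = qlin q c n" using c unfolding qbasis_def by blast
    then show ?thesis unfolding qlin_def by (simp only:, intro qv.span_sum qv.span_scale qv.span_base) auto
  qed
  then show ?thesis by auto
qed

lemma steinitz: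
  fixes c :: "nat \<Rightarrow> 'a::field_char_0"
  assumes "qbasis c n"
  shows "\<exists>q. (\<exists>i\<le>n. q i \<noteq> 0) \<and> (\<Sum>i\<le>n. of_rat (q i) * (u i :: 'a::field_char_0)) = 0"
proof (cases "inj_on u {..n}")
  case True
  let ?U = "u ` {..n}"
  have "\<not> qv.independent ?U"
  proof
    assume ind: "qv.independent ?U"
    have "finite ?U \<and> card ?U \<le> card (c ` {..<n})"
      using qv.independent_span_bound[of "c ` {..<n}" ?U] ind qbasis_span[OF assms] by auto
    moreover have "card ?U = Suc n" using True by (simp add: card_image)
    moreover have "card (c ` {..<n}) \<le> n" using card_image_le[of "{..<n}" c] by simp
    ultimately show False by simp
  qed
  then obtain w where w: "\<exists>v\<in>?U. w v \<noteq> 0" "(\<Sum>v\<in>?U. of_rat (w v) * v) = 0"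
    using qv.dependent_finite[of ?U] by auto
  have "(\<Sum>i\<le>n. of_rat (w (u i)) * u i) = 0" using w(2) sum.reindex[OF True, of "\<lambda>v. of_rat (w v) * v"] by simp
  then show ?thesis using w(1) by (intro exI[of _ "\<lambda>i. w (u i)"]) auto
next
  case False
  then obtain i j where ij: "i \<le> n" "j \<le> n" "i \<noteq> j" "u i = u j" unfolding inj_on_def by auto
  let ?q = "\<lambda>k. (if k = i then 1 else 0) - (if k = j then 1 else 0) :: rat"
  have e: "of_rat (?q k) * u k = (if k = i then u i else 0) - (if k = j then u j else 0)" for k
    using ij by auto
  have "(\<Sum>k\<le>n. of_rat (?q k) * u k) = 0"
    unfolding e sum_subtractf using ij by (simp only: sum.delta) simp
  moreover have "\<exists>i'\<le>n. ?q i' \<noteq> 0" using ij by (intro exI[of _ i]) simp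
  ultimately show ?thesis by (intro exI[of _ ?q] conjI) (assumption+)
qed

lemma nf_basis:
  assumes "number_field TYPE('a::field_char_0)"
  shows "\<exists>c n. qbasis (c :: nat \<Rightarrow> 'a) n"
proof -
  obtain B :: "'a set" where B: "finite B" "\<forall>x. \<exists>q. x = (\<Sum>b\<in>B. of_rat (q b) * b)"
    using assms unfolding number_field_def by blast
  have spB: "x \<in> qv.span B" for x
  proof -
    obtain q where "x = (\<Sum>b\<in>B. of_rat (q b) * b)" using B(2) by blast
    then show ?thesis by (simp only:, intro qv.span_sum qv.span_scale qv.span_base) auto
  qed
  obtain C where C: "C \<subseteq> B" "qv.independent C" "B \<subseteq> qv.span C"
    using qv.maximal_independent_subset[of B] by blast
  have spC: "x \<in> qv.span C" for x
  proof -
    have "qv.span B \<subseteq> qv.span (qv.span C)" using C(3) by (rule qv.span_mono)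
    then show ?thesis using spB qv.span_span by blast
  qed
  have fC: "finite C" using C(1) B(1) finite_subset by blast
  obtain h where h: "bij_betw h {0..<card C} C" using ex_bij_betw_nat_finite[OF fC] by blast
  define N where "N = card C"
  have h': "bij_betw h {..<N} C" using h unfolding N_def by (simp add: atLeast0LessThan)
  have "qbasis h N" unfolding qbasis_def
  proof (intro conjI allI impI)
    fix x
    obtain w where w: "x = (\<Sum>v\<in>C. of_rat (w v) * v)" using spC[of x] qv.span_finite[OF fC] by auto
    also have "\<dots> = (\<Sum>i<N. of_rat (w (h i)) * h i)"
      using sum.reindex_bij_betw[OF h', of "\<lambda>v. of_rat (w v) * v"] by simp
    finally show "\<exists>q. x = qlin q h N" unfolding qlin_def by (rule exI[of _ "\<lambda>i. w (h i)"])
  next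
    fix q i assume q: "qlin q h N = 0" and i: "i < N"
    define w where "w v = q (inv_into {..<N} h v)" for v
    have "(\<Sum>v\<in>C. of_rat (w v) * v) = (\<Sum>i<N. of_rat (w (h i)) * h i)"
      using sum.reindex_bij_betw[OF h', of "\<lambda>v. of_rat (w v) * v"] by simp
    also have "\<dots> = qlin q h N" unfolding qlin_def w_def
      by (rule sum.cong[OF refl]) (use bij_betw_inv_into_left[OF h'] in simp)
    finally have "(\<Sum>v\<in>C. of_rat (w v) * v) = 0" using q by simp
    moreover have "h i \<in> C" using h' i bij_betwE by blast
    ultimately have "w (h i) = 0" using qv.independentD[OF C(2) fC subset_refl] by blast
    then show "q i = 0" unfolding w_def using bij_betw_inv_into_left[OF h'] i by simp
  qed
  then show ?thesis by blast
qed

lemma lin_sum: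
  assumes add: "\<And>x y. f (x + y) = f x + f y" and sc: "\<And>r x. f (of_rat r * x) = of_rat r * f x"
  shows "f (\<Sum>i\<in>A. of_rat (q i) * u i) = (\<Sum>i\<in>A. of_rat (q i) * f (u i :: 'a::field_char_0) :: 'b::field_char_0)"
proof (induction A rule: infinite_finite_induct)
  case (infinite A) then show ?case using sc[of 0 0] by simp
next
  case empty then show ?case using sc[of 0 0] by simp
next
  case (insert x F) then show ?case by (simp add: add sc)
qed

lemma inj_surj:
  fixes c :: "nat \<Rightarrow> 'a::field_char_0" and f :: "'a \<Rightarrow> 'a"
  assumes c: "qbasis c n"
    and add: "\<And>x y. f (x + y) = f x + f y" and sc: "\<And>r x. f (of_rat r * x) = of_rat r * f x"
    and inj: "\<And>x. f x = 0 \<Longrightarrow> x = 0"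
  shows "\<exists>x. f x = (t::'a::field_char_0)"
proof -
  have fs: "f (qlin q c n) = (\<Sum>i<n. of_rat (q i) * f (c i))" for q
    unfolding qlin_def by (rule lin_sum[OF add sc])
  obtain q where q: "\<exists>i\<le>n. q i \<noteq> 0" "(\<Sum>i\<le>n. of_rat (q i) * (if i < n then f (c i) else t)) = 0"
    using steinitz[OF c, of "\<lambda>i. if i < n then f (c i) else t"] by blast
  have "(\<Sum>i\<le>n. of_rat (q i) * (if i < n then f (c i) else t)) = (\<Sum>i<n. of_rat (q i) * f (c i)) + of_rat (q n) * t"
    unfolding lessThan_Suc_atMost[symmetric] sum.lessThan_Suc by simp
  then have sp: "(\<Sum>i<n. of_rat (q i) * f (c i)) = - (of_rat (q n) * t)" using q(2) by (simp add: add_eq_0_iff)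
  show ?thesis
  proof (cases "q n = 0")
    case True
    then have "f (qlin q c n) = 0" using sp fs by simp
    then have "qlin q c n = 0" by (rule inj)
    then have "\<forall>i<n. q i = 0" using c unfolding qbasis_def by blast
    then show ?thesis using q(1) True by (metis le_neq_implies_less)
  next
    case False
    have "f (qlin (\<lambda>i. - q i / q n) c n) = (\<Sum>i<n. of_rat (- q i / q n) * f (c i))" by (rule fs)
    also have "\<dots> = - (1 / of_rat (q n)) * (\<Sum>i<n. of_rat (q i) * f (c i))"
      by (simp add: sum_distrib_left of_rat_divide of_rat_minus)
    also have "\<dots> = t" using sp False by simp
    finally show ?thesis by blast
  qed
qed

lemma common_denom: "finite (A::rat set) \<Longrightarrow> \<exists>D::int. D > 0 \<and> (\<forall>q\<in>A. of_int D * q \<in> \<int>)"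
proof (induction rule: finite_induct)
  case empty show ?case by (intro exI[of _ 1]) auto
next
  case (insert a A)
  then obtain D where D: "D > 0" "\<forall>q\<in>A. of_int D * q \<in> \<int>" by blast
  obtain p d where pd: "quotient_of a = (p, d)" by (cases "quotient_of a")
  have d: "d > 0" using quotient_of_denom_pos[OF pd] .
  have a: "a = of_int p / of_int d" using quotient_of_div[OF pd] .
  have "of_int (D * d) * a = of_int (D * p)" using a d by simp
  then have 1: "of_int (D * d) * a \<in> \<int>" by (metis Ints_of_int)
  have 2: "of_int (D * d) * q \<in> \<int>" if "q \<in> A" for q
  proof -
    have "of_int (D * d) * q = of_int d * (of_int D * q)" by simp
    then show ?thesis using D(2) that by (metis Ints_mult Ints_of_int)
  qed
  show ?case using 1 2 D(1) d by (intro exI[of _ "D * d"]) auto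
qed



lemma tr_add: "qbasis c n \<Longrightarrow> tr c n (x + y) = tr c n x + tr c n y"
proof -
  assume c: "qbasis c n"
  have "tr c n (x + y) = (\<Sum>i<n. crd c n (x * c i) i + crd c n (y * c i) i)"
    unfolding tr_def by (rule sum.cong[OF refl]) (simp add: distrib_right crd_add[OF c])
  then show ?thesis unfolding tr_def by (simp add: sum.distrib)
qed

lemma tr_scale: "qbasis c n \<Longrightarrow> tr c n (of_rat r * x) = r * tr c n x"
  using tr_lin[of c n "{0::nat}" "\<lambda>_. r" "\<lambda>_. x"] by simp

lemma qbasis_pos: "qbasis (c :: nat \<Rightarrow> 'a::field_char_0) n \<Longrightarrow> n > 0"
proof (rule ccontr)
  assume c: "qbasis c n" "\<not> n > 0"
  then obtain q where "(1::'a) = qlin q c n" unfolding qbasis_def by blast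
  then show False using c(2) by (simp add: qlin_def)
qed

lemma tr_nondeg:
  assumes c: "qbasis c n" and x: "x \<noteq> 0"
  shows "\<exists>j<n. tr c n (x * c j) \<noteq> 0"
proof (rule ccontr)
  assume all0: "\<not> (\<exists>j<n. tr c n (x * c j) \<noteq> 0)"
  obtain r where r: "inverse x = qlin r c n" using c unfolding qbasis_def by blast
  have "1 = x * inverse x" using x by simp
  also have "\<dots> = (\<Sum>j<n. of_rat (r j) * (x * c j))" unfolding r qlin_def
    by (simp add: sum_distrib_left mult.left_commute)
  finally have "tr c n 1 = tr c n (\<Sum>j<n. of_rat (r j) * (x * c j))" by simp
  also have "\<dots> = (\<Sum>j<n. r j * tr c n (x * c j))" using tr_lin[OF c, of "{..<n}" r "\<lambda>j. x * c j"] by simp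
  also have "\<dots> = 0" using all0 by simp
  finally show False using tr_one[OF c] qbasis_pos[OF c] by simp
qed

lemma dual_bound:
  fixes c :: "nat \<Rightarrow> 'a::field_char_0"
  assumes c: "qbasis c n"
  shows "\<exists>D::int. D > 0 \<and> (\<forall>x. (\<forall>j<n. tr c n (x * c j) \<in> \<int>) \<longrightarrow> of_int D * x \<in> range (\<lambda>z. zlin z c n))"
proof -
  define psi where "psi x = qlin (\<lambda>j. tr c n (x * c j)) c n" for x
  have padd: "psi (x + y) = psi x + psi y" for x y
    unfolding psi_def qlin_def by (simp add: distrib_right tr_add[OF c] of_rat_add sum.distrib)
  have psc: "psi (of_rat r * x) = of_rat r * psi x" for r x
  proof -
    have e: "tr c n (of_rat r * x * c j) = r * tr c n (x * c j)" for j
      using tr_scale[OF c, of r "x * c j"] by (simp only: mult.assoc)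
    show ?thesis unfolding psi_def qlin_def e sum_distrib_left by (rule sum.cong[OF refl]) (simp only: of_rat_mult mult.assoc)
  qed
  have pinj: "x = 0" if "psi x = 0" for x
  proof (rule ccontr)
    assume "x \<noteq> 0"
    then obtain j where j: "j < n" "tr c n (x * c j) \<noteq> 0" using tr_nondeg[OF c] by blast
    have "psi x = qlin (\<lambda>_. 0) c n" using that by (simp add: qlin_def)
    then have "tr c n (x * c j) = 0" using qbasis_unique[OF c _ j(1)] unfolding psi_def by blast
    then show False using j by simp
  qed
  have "\<forall>l. \<exists>d. l < n \<longrightarrow> psi d = c l" using inj_surj[OF c padd psc pinj] by blast
  then obtain ds where ds: "\<And>l. l < n \<Longrightarrow> psi (ds l) = c l" by metis
  have trds: "tr c n (ds l * c j) = (if j = l then 1 else 0)" if "l < n" "j < n" for l j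
  proof -
    have "qlin (\<lambda>j. tr c n (ds l * c j)) c n = qlin (crd c n (c l)) c n"
      using ds[OF that(1)] crd[OF c, of "c l"] unfolding psi_def by simp
    then have "tr c n (ds l * c j) = crd c n (c l) j" by (rule qbasis_unique[OF c _ that(2)])
    then show ?thesis using crd_basis[OF c that(2) that(1)] by simp
  qed
  have repr: "x = (\<Sum>l<n. of_rat (tr c n (x * c l)) * ds l)" for x
  proof -
    have "psi (\<Sum>l<n. of_rat (tr c n (x * c l)) * ds l) = (\<Sum>l<n. of_rat (tr c n (x * c l)) * psi (ds l))"
      by (rule lin_sum[OF padd psc])
    also have "\<dots> = (\<Sum>l<n. of_rat (tr c n (x * c l)) * c l)" by (rule sum.cong) (auto simp: ds)
    also have "\<dots> = psi x" unfolding psi_def qlin_def ..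
    finally have "psi (x - (\<Sum>l<n. of_rat (tr c n (x * c l)) * ds l)) = 0"
      using padd[of x "- (\<Sum>l<n. of_rat (tr c n (x * c l)) * ds l)"] psc[of "-1"] by simp
    then have "x - (\<Sum>l<n. of_rat (tr c n (x * c l)) * ds l) = 0" by (rule pinj)
    then show ?thesis by simp
  qed
  obtain D where D0: "D > 0" "\<forall>q\<in>(\<lambda>(l,k). crd c n (ds l) k) ` ({..<n} \<times> {..<n}). of_int D * q \<in> \<int>"
    using common_denom[of "(\<lambda>(l,k). crd c n (ds l) k) ` ({..<n} \<times> {..<n})"] by blast
  have D: "D > 0" "\<And>l k. l < n \<Longrightarrow> k < n \<Longrightarrow> of_int D * crd c n (ds l) k \<in> \<int>"
    using D0 by auto
  have "\<forall>l k. \<exists>z. l < n \<and> k < n \<longrightarrow> of_int D * crd c n (ds l) k = of_int z"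
    using D(2) Ints_cases by metis
  then obtain M where M: "\<And>l k. l < n \<Longrightarrow> k < n \<Longrightarrow> of_int D * crd c n (ds l) k = of_int (M l k)" by metis
  have dsl: "of_int D * ds l = zlin (M l) c n" if "l < n" for l
  proof -
    have e: "ds l = (\<Sum>k<n. of_rat (crd c n (ds l) k) * c k)"
      using crd[OF c, of "ds l"] unfolding qlin_def .
    have "of_int D * ds l = of_int D * (\<Sum>k<n. of_rat (crd c n (ds l) k) * c k)"
      using arg_cong[OF e, of "\<lambda>v. of_int D * v"] .
    also have "\<dots> = (\<Sum>k<n. of_rat (of_int D * crd c n (ds l) k) * c k)"
      by (simp add: sum_distrib_left of_rat_mult mult.assoc)
    also have "\<dots> = zlin (M l) c n" unfolding zlin_def by (rule sum.cong) (auto simp: M that)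
    finally show ?thesis .
  qed
  show ?thesis
  proof (intro exI conjI allI impI)
    show "D > 0" by fact
    fix x assume t: "\<forall>j<n. tr c n (x * c j) \<in> \<int>"
    have "\<forall>l. \<exists>z. l < n \<longrightarrow> tr c n (x * c l) = of_int z" using t Ints_cases by metis
    then obtain T where T: "\<And>l. l < n \<Longrightarrow> tr c n (x * c l) = of_int (T l)" by metis
    have "of_int D * x = (\<Sum>l<n. of_int (T l) * (of_int D * ds l))"
      by (subst repr) (simp add: sum_distrib_left T mult.left_commute)
    also have "\<dots> = (\<Sum>l<n. of_int (T l) * zlin (M l) c n)" by (rule sum.cong) (auto simp: dsl)
    also have "\<dots> = zlin (\<lambda>k. \<Sum>l<n. T l * M l k) c n"
      unfolding zlin_def by (simp add: sum_distrib_left sum_distrib_right mult.assoc) (rule sum.swap)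
    finally show "of_int D * x \<in> range (\<lambda>z. zlin z c n)" by blast
  qed
qed



inductive_set zsp :: "'a::comm_ring_1 set \<Rightarrow> 'a set" for F where
  zsp_zero: "0 \<in> zsp F"
| zsp_gen: "f \<in> F \<Longrightarrow> f \<in> zsp F"
| zsp_add: "x \<in> zsp F \<Longrightarrow> y \<in> zsp F \<Longrightarrow> x + y \<in> zsp F"
| zsp_neg: "x \<in> zsp F \<Longrightarrow> - x \<in> zsp F"

lemma addsub_zsp: "addsub (zsp F)"
  unfolding addsub_def by (auto intro: zsp.intros)

lemma zsp_int_mult: "x \<in> zsp F \<Longrightarrow> of_int k * x \<in> zsp F"
  by (rule addsub_int_mult[OF addsub_zsp])

definition pr :: "'a::comm_ring_1 set \<Rightarrow> 'a set \<Rightarrow> 'a set" where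
  "pr A B = (\<lambda>(a,b). a * b) ` (A \<times> B)"

lemma finite_pr: "finite A \<Longrightarrow> finite B \<Longrightarrow> finite (pr A B)"
  unfolding pr_def by simp

lemma zsp_mult_gen: "a \<in> zsp A \<Longrightarrow> b \<in> B \<Longrightarrow> a * b \<in> zsp (pr A B)"
proof (induction a rule: zsp.induct)
  case zsp_zero then show ?case by (simp add: zsp.zsp_zero)
next
  case (zsp_gen f) then show ?case unfolding pr_def by (intro zsp.zsp_gen) force
next
  case (zsp_add x y) then show ?case by (simp add: distrib_right zsp.zsp_add)
next
  case (zsp_neg x) then show ?case by (simp add: zsp.zsp_neg)
qed

lemma zsp_mult: assumes "a \<in> zsp A" "b \<in> zsp B" shows "a * b \<in> zsp (pr A B)"
  using assms(2)
proof (induction b rule: zsp.induct)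
  case zsp_zero then show ?case by (simp add: zsp.zsp_zero)
next
  case (zsp_gen f) then show ?case by (rule zsp_mult_gen[OF assms(1)])
next
  case (zsp_add x y) then show ?case by (simp add: distrib_left zsp.zsp_add)
next
  case (zsp_neg x) then show ?case by (simp add: zsp.zsp_neg)
qed

lemma zsp_stable: assumes "\<forall>f\<in>F. y * f \<in> zsp F" "x \<in> zsp F" shows "y * x \<in> zsp F"
  using assms(2)
proof (induction x rule: zsp.induct)
  case zsp_zero then show ?case by (simp add: zsp.zsp_zero)
next
  case (zsp_gen f) then show ?case using assms(1) by blast
next
  case (zsp_add x y) then show ?case by (simp add: distrib_left zsp.zsp_add)
next
  case (zsp_neg x) then show ?case by (simp add: zsp.zsp_neg)
qed

definition stab :: "'a::field_char_0 \<Rightarrow> bool" where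
  "stab y \<longleftrightarrow> (\<exists>F. finite F \<and> 1 \<in> zsp F \<and> (\<forall>f\<in>F. y * f \<in> zsp F))"

lemma stab_int: "stab (of_int k)"
  unfolding stab_def
  by (intro exI[of _ "{1}"]) (auto intro: zsp.zsp_gen zsp_int_mult[of 1 "{1}" k, simplified])

lemma stab_mult:
  assumes "stab y1" "stab y2" shows "stab (y1 * y2)"
proof -
  obtain F1 where F1: "finite F1" "1 \<in> zsp F1" "\<forall>f\<in>F1. y1 * f \<in> zsp F1" using assms(1) stab_def by blast
  obtain F2 where F2: "finite F2" "1 \<in> zsp F2" "\<forall>f\<in>F2. y2 * f \<in> zsp F2" using assms(2) stab_def by blast
  have "1 \<in> zsp (pr F1 F2)" using zsp_mult[OF F1(2) F2(2)] by simp
  moreover have "y1 * y2 * f \<in> zsp (pr F1 F2)" if fpr: "f \<in> pr F1 F2" for f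
  proof -
    obtain a b where ab: "a \<in> F1" "b \<in> F2" "f = a * b" using fpr unfolding pr_def by auto
    have "y1 * y2 * f = (y1 * a) * (y2 * b)" using ab(3) by (simp add: ac_simps)
    then show ?thesis using zsp_mult F1(3) F2(3) ab by metis
  qed
  ultimately show ?thesis unfolding stab_def using finite_pr[OF F1(1) F2(1)] by blast
qed

lemma stab_add:
  assumes "stab y1" "stab y2" shows "stab (y1 + y2)"
proof -
  obtain F1 where F1: "finite F1" "1 \<in> zsp F1" "\<forall>f\<in>F1. y1 * f \<in> zsp F1" using assms(1) stab_def by blast
  obtain F2 where F2: "finite F2" "1 \<in> zsp F2" "\<forall>f\<in>F2. y2 * f \<in> zsp F2" using assms(2) stab_def by blast
  have "1 \<in> zsp (pr F1 F2)" using zsp_mult[OF F1(2) F2(2)] by simp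
  moreover have "(y1 + y2) * f \<in> zsp (pr F1 F2)" if fpr: "f \<in> pr F1 F2" for f
  proof -
    obtain a b where ab: "a \<in> F1" "b \<in> F2" "f = a * b" using fpr unfolding pr_def by auto
    have "(y1 + y2) * f = (y1 * a) * b + a * (y2 * b)" using ab(3) by (simp add: algebra_simps)
    moreover have "(y1 * a) * b \<in> zsp (pr F1 F2)" using zsp_mult F1(3) ab zsp.zsp_gen by metis
    moreover have "a * (y2 * b) \<in> zsp (pr F1 F2)" using zsp_mult F2(3) ab zsp.zsp_gen by metis
    ultimately show ?thesis by (simp add: zsp.zsp_add)
  qed
  ultimately show ?thesis unfolding stab_def using finite_pr[OF F1(1) F2(1)] by blast
qed

lemma stab_neg: "stab y \<Longrightarrow> stab (- y)"
  using stab_mult[OF stab_int[of "-1"]] by simp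

lemma qbasis_zindep: "qbasis c n \<Longrightarrow> zindep c n"
  unfolding zindep_def qbasis_def
proof (intro allI impI)
  fix z i assume a: "(\<forall>x. \<exists>q. x = qlin q c n) \<and> (\<forall>q. qlin q c n = 0 \<longrightarrow> (\<forall>i<n. q i = 0))" "zlin z c n = 0" "i < n"
  have "qlin (\<lambda>i. of_int (z i)) c n = 0" using a(2) unfolding qlin_def zlin_def by simp
  then have "rat_of_int (z i) = 0" using a(1,3) by blast
  then show "z i = 0" by simp
qed

lemma scaled_free:
  fixes c :: "nat \<Rightarrow> 'a::field_char_0"
  assumes "zindep c n" "addsub H" "D \<noteq> 0" "\<forall>x\<in>H. of_int D * x \<in> range (\<lambda>z. zlin z c n)"
  shows "\<exists>m e. (\<forall>i<m. e i \<in> H) \<and> zindep e m \<and> H \<subseteq> range (\<lambda>z. zlin z e m)"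
proof -
  let ?H = "(\<lambda>x. of_int D * x) ` H"
  have D: "(of_int D :: 'a) \<noteq> 0" using assms(3) by simp
  have hA: "addsub ?H" using assms(2) unfolding addsub_def
  proof (intro conjI ballI)
    show "0 \<in> ?H" using assms(2) unfolding addsub_def by (metis image_eqI mult_zero_right)
  next
    fix a b assume "a \<in> ?H" "b \<in> ?H"
    then obtain x y where "x \<in> H" "y \<in> H" "a = of_int D * x" "b = of_int D * y" by blast
    moreover have "x + y \<in> H" using assms(2) calculation unfolding addsub_def by blast
    ultimately show "a + b \<in> ?H" by (metis distrib_left image_eqI)
  next
    fix a assume "a \<in> ?H"
    then obtain x where "x \<in> H" "a = of_int D * x" by blast
    moreover have "- x \<in> H" using assms(2) calculation unfolding addsub_def by blast
    ultimately show "- a \<in> ?H" by (metis mult_minus_right image_eqI)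
  qed
  have hB: "?H \<subseteq> range (\<lambda>z. zlin z c n)" using assms(4) by auto
  obtain m e' where e': "\<forall>i<m. e' i \<in> ?H" "zindep e' m" "?H \<subseteq> range (\<lambda>z. zlin z e' m)"
    using subgroup_free[OF assms(1) hA hB] by blast
  define e where "e i = e' i / of_int D" for i
  have ze: "zlin z e' m = of_int D * zlin z e m" for z
    unfolding zlin_def e_def using D by (simp add: sum_distrib_left)
  show ?thesis
  proof (intro exI conjI)
    show "\<forall>i<m. e i \<in> H" using e'(1) D unfolding e_def by auto
    show "zindep e m" using e'(2) D unfolding zindep_def ze by simp
    show "H \<subseteq> range (\<lambda>z. zlin z e m)"
    proof
      fix x assume "x \<in> H"
      then obtain z where "of_int D * x = zlin z e' m" using e'(3) by blast
      then have "x = zlin z e m" using D ze by simp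
      then show "x \<in> range (\<lambda>z. zlin z e m)" by blast
    qed
  qed
qed

lemma zsp_bounded:
  fixes c :: "nat \<Rightarrow> 'a::field_char_0"
  assumes c: "qbasis c n" and F: "finite F"
  shows "\<exists>D::int. D \<noteq> 0 \<and> (\<forall>x\<in>zsp F. of_int D * x \<in> range (\<lambda>z. zlin z c n))"
proof -
  obtain D where D0: "D > 0" "\<forall>q\<in>(\<lambda>(f,k). crd c n f k) ` (F \<times> {..<n}). of_int D * q \<in> \<int>"
    using common_denom[of "(\<lambda>(f,k). crd c n f k) ` (F \<times> {..<n})"] F by blast
  have D: "\<And>f k. f \<in> F \<Longrightarrow> k < n \<Longrightarrow> of_int D * crd c n f k \<in> \<int>" using D0 by auto
  have gen: "of_int D * f \<in> range (\<lambda>z. zlin z c n)" if f: "f \<in> F" for f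
  proof -
    have "\<forall>k. \<exists>z. k < n \<longrightarrow> of_int D * crd c n f k = of_int z" using D[OF f] Ints_cases by metis
    then obtain M where M: "\<And>k. k < n \<Longrightarrow> of_int D * crd c n f k = of_int (M k)" by metis
    have e: "f = (\<Sum>k<n. of_rat (crd c n f k) * c k)" using crd[OF c, of f] unfolding qlin_def .
    have "of_int D * f = of_int D * (\<Sum>k<n. of_rat (crd c n f k) * c k)"
      using arg_cong[OF e, of "\<lambda>v. of_int D * v"] .
    also have "\<dots> = (\<Sum>k<n. of_rat (of_int D * crd c n f k) * c k)"
      by (simp add: sum_distrib_left of_rat_mult mult.assoc)
    also have "\<dots> = zlin M c n" unfolding zlin_def by (rule sum.cong) (auto simp: M)
    finally show ?thesis by blast
  qed
  have "of_int D * x \<in> range (\<lambda>z. zlin z c n)" if "x \<in> zsp F" for x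
    using that
  proof (induction x rule: zsp.induct)
    case zsp_zero
    have "of_int D * 0 = zlin (\<lambda>_. 0) c n" by (simp add: zlin_def)
    then show ?case by blast
  next
    case (zsp_gen f) then show ?case by (rule gen)
  next
    case (zsp_add x y)
    then obtain z z' where "of_int D * x = zlin z c n" "of_int D * y = zlin z' c n" by blast
    then have "of_int D * (x + y) = zlin (\<lambda>i. z i + z' i) c n" by (simp add: zlin_add distrib_left)
    then show ?case by blast
  next
    case (zsp_neg x)
    then obtain z where "of_int D * x = zlin z c n" by blast
    then have "of_int D * (- x) = zlin (\<lambda>i. - z i) c n" by (simp add: zlin_neg)
    then show ?case by blast
  qed
  then show ?thesis using D0(1) by (intro exI[of _ D]) auto
qed

lemma zlin_qlin: "zlin z e m = qlin (\<lambda>i. of_int (z i)) e m"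
  unfolding zlin_def qlin_def by simp

lemma stab_tr_int:
  fixes c :: "nat \<Rightarrow> 'a::field_char_0"
  assumes c: "qbasis c n" and y: "stab y"
  shows "tr c n y \<in> \<int>"
proof -
  obtain F where F: "finite F" "1 \<in> zsp F" "\<forall>f\<in>F. y * f \<in> zsp F" using y stab_def by blast
  define C where "C = c ` {..<n}"
  define L where "L = zsp (pr F C)"
  have cL: "c i \<in> L" if "i < n" for i
    using zsp_mult_gen[OF F(2), of "c i" C] that unfolding L_def C_def by simp
  have yL: "y * x \<in> L" if "x \<in> L" for x
    unfolding L_def
  proof (rule zsp_stable[of "pr F C" y x])
    show "\<forall>f\<in>pr F C. y * f \<in> zsp (pr F C)"
    proof
      fix f assume "f \<in> pr F C"
      then obtain a b where ab: "a \<in> F" "b \<in> C" "f = a * b" unfolding pr_def by auto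
      then show "y * f \<in> zsp (pr F C)" using zsp_mult_gen[of "y * a" F b C] F(3) by (simp add: mult.assoc)
    qed
    show "x \<in> zsp (pr F C)" using that L_def by simp
  qed
  obtain D where D: "D \<noteq> 0" "\<forall>x\<in>L. of_int D * x \<in> range (\<lambda>z. zlin z c n)"
    using zsp_bounded[OF c, of "pr F C"] finite_pr[OF F(1)] unfolding L_def C_def by blast
  obtain m e where e: "\<forall>i<m. e i \<in> L" "zindep e m" "L \<subseteq> range (\<lambda>z. zlin z e m)"
    using scaled_free[OF qbasis_zindep[OF c] _ D(1) D(2)] addsub_zsp unfolding L_def by blast
  have eb: "qbasis e m" unfolding qbasis_def
  proof (intro conjI allI impI)
    fix x
    have "\<forall>i. \<exists>z. i < n \<longrightarrow> c i = zlin z e m" using cL e(3) by blast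
    then obtain Z where Z: "\<And>i. i < n \<Longrightarrow> c i = zlin (Z i) e m" by metis
    obtain q where q: "x = qlin q c n" using c qbasis_def by blast
    have "x = (\<Sum>i<n. of_rat (q i) * (\<Sum>l<m. of_int (Z i l) * e l))"
      unfolding q qlin_def by (rule sum.cong) (auto simp: Z zlin_def)
    also have "\<dots> = qlin (\<lambda>l. \<Sum>i<n. q i * of_int (Z i l)) e m"
      unfolding qlin_def by (simp add: sum_distrib_left sum_distrib_right of_rat_sum of_rat_mult mult.assoc) (rule sum.swap)
    finally show "\<exists>q. x = qlin q e m" by blast
  next
    fix q i assume q: "qlin q e m = 0" and i: "i < m"
    obtain D' where D': "D' > 0" "\<forall>r\<in>q ` {..<m}. of_int D' * r \<in> \<int>" using common_denom[of "q ` {..<m}"] by blast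
    have "\<forall>l. \<exists>z. l < m \<longrightarrow> of_int D' * q l = of_int z" using D'(2) Ints_cases by (metis image_eqI lessThan_iff)
    then obtain W where W: "\<And>l. l < m \<Longrightarrow> of_int D' * q l = of_int (W l)" by metis
    have W': "(of_int (W l)::'a) = of_int D' * of_rat (q l)" if "l < m" for l
      using arg_cong[OF W[OF that], of "of_rat :: rat \<Rightarrow> 'a"] by (simp add: of_rat_mult)
    have "zlin W e m = of_int D' * qlin q e m"
      unfolding zlin_def qlin_def sum_distrib_left
      by (rule sum.cong[OF refl]) (simp add: W' mult.assoc)
    then have "zlin W e m = 0" using q by simp
    then have "W i = 0" using e(2) i unfolding zindep_def by blast
    then show "q i = 0" using W[OF i] D'(1) by simp
  qed
  have "crd e m (y * e l) l \<in> \<int>" if lm: "l < m" for l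
  proof -
    have "y * e l \<in> L" using yL[of "e l"] e(1) lm by blast
    then obtain z where "y * e l = zlin z e m" using e(3) by blast
    then have "crd e m (y * e l) l = of_int (z l)" using crd_unique[OF eb _ lm] zlin_qlin by metis
    then show ?thesis by simp
  qed
  then have "tr e m y \<in> \<int>" unfolding tr_def by (intro Ints_sum) auto
  then show ?thesis using tr_invariant[OF c eb] by simp
qed



lemma bez: fixes N :: nat and a :: "nat \<Rightarrow> int" shows "\<exists>d e. (\<forall>i\<le>N. d dvd a i) \<and> (\<Sum>i\<le>N. e i * a i) = (d::int)"
proof (induction N)
  case 0 show ?case by (intro exI[of _ "a 0"] exI[of _ "\<lambda>_. 1"]) simp
next
  case (Suc N)
  then obtain d e where de: "\<forall>i\<le>N. d dvd a i" "(\<Sum>i\<le>N. e i * a i) = d" by blast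
  obtain u v where uv: "u * d + v * a (Suc N) = gcd d (a (Suc N))" using bezout_int by blast
  define e' where "e' i = (if i \<le> N then u * e i else v)" for i
  have "\<forall>i\<le>Suc N. gcd d (a (Suc N)) dvd a i"
    using de(1) by (metis dvd_trans gcd_dvd1 gcd_dvd2 le_Suc_eq)
  moreover have "(\<Sum>i\<le>Suc N. e' i * a i) = gcd d (a (Suc N))"
  proof -
    have "(\<Sum>i\<le>Suc N. e' i * a i) = (\<Sum>i\<le>N. e' i * a i) + v * a (Suc N)" by (simp add: e'_def)
    also have "(\<Sum>i\<le>N. e' i * a i) = u * (\<Sum>i\<le>N. e i * a i)"
      unfolding sum_distrib_left e'_def by (rule sum.cong) auto
    finally show ?thesis using de(2) uv by simp
  qed
  ultimately show ?case by blast
qed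

lemma alg_rel:
  fixes c :: "nat \<Rightarrow> 'a::field_char_0" and g :: 'a
  assumes c: "qbasis c n"
  shows "\<exists>N (a::nat \<Rightarrow> int). (\<Sum>i\<le>N. of_int (a i) * g ^ i) = 0 \<and> a N \<noteq> 0 \<and> (\<exists>e. (\<Sum>i\<le>N. e i * a i) = 1)"
proof -
  obtain q where q: "\<exists>i\<le>n. q i \<noteq> 0" "(\<Sum>i\<le>n. of_rat (q i) * g ^ i) = 0"
    using steinitz[OF c, of "\<lambda>i. g ^ i"] by blast
  obtain D where D: "D > 0" "\<forall>r\<in>q ` {..n}. of_int D * r \<in> \<int>" using common_denom[of "q ` {..n}"] by blast
  have "\<forall>i. \<exists>z. i \<le> n \<longrightarrow> of_int D * q i = of_int z" using D(2) Ints_cases by (metis atMost_iff image_eqI)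
  then obtain A where A: "\<And>i. i \<le> n \<Longrightarrow> of_int D * q i = of_int (A i)" by metis
  have A': "(of_int (A i) :: 'a) = of_int D * of_rat (q i)" if "i \<le> n" for i
    using arg_cong[OF A[OF that], of "of_rat :: rat \<Rightarrow> 'a"] by (simp add: of_rat_mult)
  have Arel: "(\<Sum>i\<le>n. of_int (A i) * g ^ i) = 0"
  proof -
    have "(\<Sum>i\<le>n. of_int (A i) * g ^ i) = of_int D * (\<Sum>i\<le>n. of_rat (q i) * g ^ i)"
      unfolding sum_distrib_left by (rule sum.cong) (auto simp: A' mult.assoc)
    then show ?thesis using q(2) by simp
  qed
  obtain i0 where i0: "i0 \<le> n" "A i0 \<noteq> 0" using q(1) A D(1) by (metis mult_eq_0_iff of_int_0_eq_iff of_int_eq_0_iff order_less_irrefl)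
  obtain d e where de: "\<forall>i\<le>n. d dvd A i" "(\<Sum>i\<le>n. e i * A i) = d" using bez[of n A] by blast
  have d0: "d \<noteq> 0" using de(1) i0 by auto
  define a where "a i = A i div d" for i
  have Ada: "A i = d * a i" if "i \<le> n" for i using de(1) that unfolding a_def by simp
  have "(\<Sum>i\<le>n. e i * A i) = d * (\<Sum>i\<le>n. e i * a i)"
    unfolding sum_distrib_left by (rule sum.cong) (auto simp: Ada mult.left_commute)
  then have "d * (\<Sum>i\<le>n. e i * a i) = d" using de(2) by simp
  then have a1: "(\<Sum>i\<le>n. e i * a i) = 1" using d0 by simp
  have "of_int d * (\<Sum>i\<le>n. of_int (a i) * g ^ i) = (0::'a)"
  proof -
    have "of_int d * (\<Sum>i\<le>n. of_int (a i) * g ^ i) = (\<Sum>i\<le>n. of_int (A i) * g ^ i)"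
      unfolding sum_distrib_left by (rule sum.cong) (auto simp: Ada mult.assoc)
    then show ?thesis using Arel by simp
  qed
  then have arel: "(\<Sum>i\<le>n. of_int (a i) * g ^ i) = (0::'a)" using d0 by simp
  define M where "M = Max {i. i \<le> n \<and> a i \<noteq> 0}"
  have ne: "{i. i \<le> n \<and> a i \<noteq> 0} \<noteq> {}" using i0 Ada by auto
  have fin: "finite {i. i \<le> n \<and> a i \<noteq> 0}" by simp
  have M: "M \<le> n" "a M \<noteq> 0" using Max_in[OF fin ne] unfolding M_def by auto
  have Mmax: "a i = 0" if mi: "M < i" "i \<le> n" for i
  proof (rule ccontr)
    assume "a i \<noteq> 0"
    then have "i \<le> M" using Max_ge[OF fin, of i] mi(2) unfolding M_def by blast
    then show False using mi(1) by simp
  qed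
  have sub: "{..M} \<subseteq> {..n}" using M(1) by auto
  have "(\<Sum>i\<le>M. of_int (a i) * g ^ i) = (\<Sum>i\<le>n. of_int (a i) * g ^ i)"
    by (rule sum.mono_neutral_left) (use sub Mmax in auto)
  moreover have "(\<Sum>i\<le>M. e i * a i) = (\<Sum>i\<le>n. e i * a i)"
    by (rule sum.mono_neutral_left) (use sub Mmax in auto)
  ultimately show ?thesis using arel a1 M(2) by (intro exI[of _ M] exI[of _ a] conjI exI[of _ e]) simp_all
qed



definition Lsp :: "'a::field \<Rightarrow> int \<Rightarrow> int \<Rightarrow> 'a set" where
  "Lsp g lo hi = zsp ((\<lambda>m. g powi m) ` {lo..hi})"

lemma zsp_sum_int: "finite A \<Longrightarrow> (\<forall>i\<in>A. u i \<in> zsp F) \<Longrightarrow> (\<Sum>i\<in>A. of_int (a i) * u i) \<in> zsp F"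
  by (induction A rule: finite_induct) (auto intro: zsp.intros zsp_int_mult)

lemma Lsp_sum: "finite A \<Longrightarrow> (\<forall>i\<in>A. lo \<le> f i \<and> f i \<le> hi) \<Longrightarrow> (\<Sum>i\<in>A. of_int (a i) * g powi f i) \<in> Lsp g lo hi"
  unfolding Lsp_def by (rule zsp_sum_int) (auto intro: zsp.zsp_gen)

lemma Lsp_gen: "lo \<le> m \<Longrightarrow> m \<le> hi \<Longrightarrow> of_int k * g powi m \<in> Lsp g lo hi"
  unfolding Lsp_def by (intro zsp_int_mult zsp.zsp_gen) auto

lemma zsp_mono: "F \<subseteq> G \<Longrightarrow> x \<in> zsp F \<Longrightarrow> x \<in> zsp G"
proof -
  assume FG: "F \<subseteq> G"
  show "x \<in> zsp F \<Longrightarrow> x \<in> zsp G"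
    by (induction x rule: zsp.induct) (use FG in \<open>auto intro: zsp.intros\<close>)
qed

lemma Lsp_mono: "lo' \<le> lo \<Longrightarrow> hi \<le> hi' \<Longrightarrow> x \<in> Lsp g lo hi \<Longrightarrow> x \<in> Lsp g lo' hi'"
  unfolding Lsp_def by (erule zsp_mono[rotated]) auto

definition vv :: "'a::field \<Rightarrow> (nat \<Rightarrow> int) \<Rightarrow> nat \<Rightarrow> 'a" where
  "vv g a k = (\<Sum>i<k. of_int (a i) * g powi (int i - int k))"

lemma vv_mult: "g \<noteq> 0 \<Longrightarrow> vv g a k * g powi j = (\<Sum>i<k. of_int (a i) * g powi (int i - int k + j))"
  unfolding vv_def sum_distrib_right by (rule sum.cong) (auto simp: power_int_add mult.assoc)

lemma rel_shift:
  assumes "g \<noteq> 0" "(\<Sum>i\<le>n. of_int (a i) * g ^ i) = (0::'a::field)"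
  shows "(\<Sum>i\<le>n. of_int (a i) * g powi (int i + t)) = 0"
proof -
  have "(\<Sum>i\<le>n. of_int (a i) * g powi (int i + t)) = (\<Sum>i\<le>n. of_int (a i) * g ^ i) * g powi t"
    unfolding sum_distrib_right by (rule sum.cong) (auto simp: power_int_add assms(1) mult.assoc)
  then show ?thesis using assms(2) by simp
qed

lemma vv_alt:
  assumes g: "g \<noteq> 0" and rel: "(\<Sum>i\<le>n. of_int (a i) * g ^ i) = (0::'a::field)" and k: "k \<le> n"
  shows "vv g a k * g powi j = - (\<Sum>i\<in>{k..n}. of_int (a i) * g powi (int i - int k + j))"
proof -
  have un: "{..n} = {..<k} \<union> {k..n}" using k by auto
  have "0 = (\<Sum>i\<le>n. of_int (a i) * g powi (int i + (j - int k)))" using rel_shift[OF g rel] by simp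
  also have "\<dots> = (\<Sum>i<k. of_int (a i) * g powi (int i - int k + j)) + (\<Sum>i\<in>{k..n}. of_int (a i) * g powi (int i - int k + j))"
    unfolding un by (subst sum.union_disjoint) (auto simp: algebra_simps)
  finally show ?thesis unfolding vv_mult[OF g] by (simp add: eq_neg_iff_add_eq_0)
qed

lemma ww_alt:
  assumes g: "g \<noteq> 0" and rel: "(\<Sum>i\<le>n. of_int (a i) * g ^ i) = (0::'a::field)" and k: "k \<le> n"
  shows "(vv g a k + of_int (a k)) * g powi j = - (\<Sum>i\<in>{k<..n}. of_int (a i) * g powi (int i - int k + j))"
proof -
  have "{k..n} = insert k {k<..n}" using k by auto
  then have "(\<Sum>i\<in>{k..n}. of_int (a i) * g powi (int i - int k + j)) = of_int (a k) * g powi j + (\<Sum>i\<in>{k<..n}. of_int (a i) * g powi (int i - int k + j))"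
    by simp
  then show ?thesis using vv_alt[OF g rel k, of j] by (simp add: distrib_right)
qed

lemma vv_L1: "g \<noteq> 0 \<Longrightarrow> lo \<le> j - int k \<Longrightarrow> j - 1 \<le> hi \<Longrightarrow> vv g a k * g powi j \<in> Lsp g lo hi"
  unfolding vv_mult by (rule Lsp_sum) auto

lemma vv_L2:
  assumes g: "g \<noteq> 0" and rel: "(\<Sum>i\<le>n. of_int (a i) * g ^ i) = (0::'a::field)" and k: "k \<le> n"
    and "lo \<le> j" "j + int n - int k \<le> hi"
  shows "vv g a k * g powi j \<in> Lsp g lo hi"
proof -
  have "(\<Sum>i\<in>{k..n}. of_int (a i) * g powi (int i - int k + j)) \<in> Lsp g lo hi"
    by (rule Lsp_sum) (use assms in auto)
  then show ?thesis unfolding vv_alt[OF g rel k] Lsp_def by (rule zsp.zsp_neg)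
qed

lemma ww_L:
  assumes g: "g \<noteq> 0" and rel: "(\<Sum>i\<le>n. of_int (a i) * g ^ i) = (0::'a::field)" and k: "k \<le> n"
    and "lo \<le> j + 1" "j + int n - int k \<le> hi"
  shows "(vv g a k + of_int (a k)) * g powi j \<in> Lsp g lo hi"
proof -
  have "(\<Sum>i\<in>{k<..n}. of_int (a i) * g powi (int i - int k + j)) \<in> Lsp g lo hi"
    by (rule Lsp_sum) (use assms in auto)
  then show ?thesis unfolding ww_alt[OF g rel k] Lsp_def by (rule zsp.zsp_neg)
qed

lemma vv_V1:
  assumes g: "g \<noteq> 0" and rel: "(\<Sum>i\<le>n. of_int (a i) * g ^ i) = (0::'a::field)" and k: "k \<le> n"
    and "0 \<le> j" "j \<le> int n + 1"
  shows "vv g a k * g powi j \<in> Lsp g 0 (int n)"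
proof (cases "int k \<le> j")
  case True then show ?thesis using assms by (intro vv_L1) auto
next
  case False then show ?thesis using assms by (intro vv_L2[OF g rel k]) auto
qed

lemma sr_add: "is_subring S \<Longrightarrow> x \<in> S \<Longrightarrow> y \<in> S \<Longrightarrow> x + y \<in> S"
  unfolding is_subring_def by blast
lemma sr_mult: "is_subring S \<Longrightarrow> x \<in> S \<Longrightarrow> y \<in> S \<Longrightarrow> x * y \<in> S"
  unfolding is_subring_def by blast
lemma sr_neg: "is_subring S \<Longrightarrow> x \<in> S \<Longrightarrow> - x \<in> S"
  unfolding is_subring_def by blast
lemma sr_0: "is_subring S \<Longrightarrow> 0 \<in> S"
  unfolding is_subring_def by blast
lemma sr_1: "is_subring S \<Longrightarrow> 1 \<in> S"
  unfolding is_subring_def by blast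
lemma sr_diff: "is_subring S \<Longrightarrow> x \<in> S \<Longrightarrow> y \<in> S \<Longrightarrow> x - y \<in> S"
  using sr_add[of S x "- y"] sr_neg[of S y] by simp
lemma sr_pow: "is_subring S \<Longrightarrow> x \<in> S \<Longrightarrow> x ^ k \<in> S"
  by (induction k) (auto intro: sr_1 sr_mult)
lemma sr_nat: "is_subring S \<Longrightarrow> of_nat k \<in> S"
  by (induction k) (auto intro: sr_0 sr_1 sr_add)
lemma sr_int: "is_subring S \<Longrightarrow> of_int k \<in> S"
proof (cases "k \<ge> 0")
  case True
  assume S: "is_subring S"
  have "of_int k = (of_nat (nat k) :: 'a)" using True by simp
  then show ?thesis using sr_nat[OF S] by metis
next
  case False
  assume S: "is_subring S"
  have "of_int k = - (of_nat (nat (- k)) :: 'a)" using False by simp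
  then show ?thesis using sr_neg[OF S sr_nat[OF S]] by metis
qed
lemma sr_sum: "is_subring S \<Longrightarrow> (\<forall>i\<in>A. f i \<in> S) \<Longrightarrow> sum f A \<in> S"
  by (induction A rule: infinite_finite_induct) (auto intro: sr_0 sr_add)

lemma Lsp_pos_mem:
  assumes S: "is_subring S" and a: "a \<in> S" "a * g \<in> S" and x: "x \<in> Lsp g 0 (int N)"
  shows "a ^ N * x \<in> S"
  using x unfolding Lsp_def
proof (induction x rule: zsp.induct)
  case zsp_zero then show ?case using sr_0[OF S] by simp
next
  case (zsp_gen f)
  then obtain m' where m': "f = g powi m'" "0 \<le> m'" "m' \<le> int N" by auto
  define m where "m = nat m'"
  have m: "f = g ^ m" "m \<le> N" using m' unfolding m_def by (simp_all add: nat_le_iff)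
    (metis nat_0_le power_int_of_nat)
  have "a ^ N * f = a ^ (N - m) * (a * g) ^ m" using m by (simp add: power_mult_distrib mult.assoc power_add[symmetric])
  then show ?case using S a by (simp add: sr_mult sr_pow)
next
  case (zsp_add x y) then show ?case using S by (simp add: distrib_left sr_add)
next
  case (zsp_neg x) then show ?case using S by (simp add: sr_neg)
qed

lemma Lsp_neg_mem:
  assumes S: "is_subring S" and b: "b \<in> S" "b * inverse g \<in> S" and x: "x \<in> Lsp g (- int N) 0"
  shows "b ^ N * x \<in> S"
  using x unfolding Lsp_def
proof (induction x rule: zsp.induct)
  case zsp_zero then show ?case using sr_0[OF S] by simp
next
  case (zsp_gen f)
  then obtain m' where m': "f = g powi m'" "- int N \<le> m'" "m' \<le> 0" by auto
  define m where "m = nat (- m')"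
  have mm: "m' = - int m" using m'(3) unfolding m_def by simp
  have m2: "m \<le> N" using m'(2) mm by linarith
  have m1: "f = g powi (- int m)" using m'(1) mm by simp
  note m = m1 m2
  have f: "f = inverse g ^ m" using m(1) by (simp add: power_int_minus power_inverse)
  have "b ^ N * f = b ^ (N - m) * (b * inverse g) ^ m" using m(2) f by (simp add: power_mult_distrib mult.assoc power_add[symmetric])
  then show ?case using S b by (simp add: sr_mult sr_pow)
next
  case (zsp_add x y) then show ?case using S by (simp add: distrib_left sr_add)
next
  case (zsp_neg x) then show ?case using S by (simp add: sr_neg)
qed

lemma Lsp_mem:
  assumes S: "is_subring S" and a: "a \<in> S" "a * g \<in> S" "(1 - a) * inverse g \<in> S"
    and x1: "x \<in> Lsp g 0 (int N)" and x2: "x \<in> Lsp g (- int N) 0"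
  shows "x \<in> S"
proof -
  define b where "b = 1 - a"
  have b: "b \<in> S" using S a(1) sr_1 sr_diff unfolding b_def by blast
  have A: "a ^ N * x \<in> S" by (rule Lsp_pos_mem[OF S a(1,2) x1])
  have B: "b ^ N * x \<in> S" by (rule Lsp_neg_mem[OF S b _ x2]) (use a(3) b_def in simp)
  have "x = (a + b) ^ (2 * N) * x" unfolding b_def by simp
  also have "\<dots> = (\<Sum>j\<le>2 * N. of_nat (2 * N choose j) * (a ^ j * b ^ (2 * N - j) * x))"
    unfolding binomial_ring sum_distrib_right by (simp add: mult.assoc)
  also have "\<dots> \<in> S"
  proof (rule sr_sum[OF S], intro ballI sr_mult[OF S sr_nat[OF S]])
    fix j assume "j \<in> {..2 * N}"
    show "a ^ j * b ^ (2 * N - j) * x \<in> S"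
    proof (cases "N \<le> j")
      case True
      have aj: "a ^ j = a ^ (j - N) * a ^ N" using True by (simp add: power_add[symmetric])
      have e: "a ^ j * b ^ (2 * N - j) * x = a ^ (j - N) * b ^ (2 * N - j) * (a ^ N * x)"
        unfolding aj by (simp only: ac_simps)
      show ?thesis unfolding e by (intro sr_mult[OF S] sr_pow[OF S] A a(1) b)
    next
      case False
      have "2 * N - j = (N - j) + N" using False by simp
      then have bj: "b ^ (2 * N - j) = b ^ (N - j) * b ^ N" by (simp add: power_add)
      have e: "a ^ j * b ^ (2 * N - j) * x = a ^ j * b ^ (N - j) * (b ^ N * x)"
        unfolding bj by (simp only: ac_simps)
      show ?thesis unfolding e by (intro sr_mult[OF S] sr_pow[OF S] B a(1) b)
    qed
  qed
  finally show ?thesis .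
qed



definition VV :: "'a::field \<Rightarrow> (nat \<Rightarrow> int) \<Rightarrow> (nat \<Rightarrow> int) \<Rightarrow> nat \<Rightarrow> 'a" where
  "VV g a e n = (\<Sum>k\<le>n. of_int (e k) * vv g a k)"

lemma one_VV:
  assumes "(\<Sum>k\<le>n. e k * a k) = (1::int)"
  shows "1 + VV g a e n = (\<Sum>k\<le>n. of_int (e k) * (vv g a k + of_int (a k)))"
proof -
  have "(\<Sum>k\<le>n. of_int (e k) * (vv g a k + of_int (a k))) = VV g a e n + of_int (\<Sum>k\<le>n. e k * a k)"
    unfolding VV_def by (simp add: distrib_left sum.distrib)
  then show ?thesis using assms by simp
qed

lemma Lsp_sum_int: "finite A \<Longrightarrow> (\<forall>k\<in>A. w k \<in> Lsp g lo hi) \<Longrightarrow> (\<Sum>k\<in>A. of_int (e k) * w k) \<in> Lsp g lo hi"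
  unfolding Lsp_def by (rule zsp_sum_int)

lemma Lsp_add: "x \<in> Lsp g lo hi \<Longrightarrow> y \<in> Lsp g lo hi \<Longrightarrow> x + y \<in> Lsp g lo hi"
  unfolding Lsp_def by (rule zsp.zsp_add)

lemma stab_of:
  assumes "g \<noteq> 0" "\<And>j. 0 \<le> j \<Longrightarrow> j \<le> int n \<Longrightarrow> x * g powi j \<in> Lsp g 0 (int n)"
  shows "stab x"
  unfolding stab_def
proof (intro exI conjI)
  let ?F = "(\<lambda>m. g powi m) ` {0..int n}"
  show "finite ?F" by simp
  show "1 \<in> zsp ?F" by (rule zsp.zsp_gen) (auto simp: image_iff intro!: bexI[of _ 0])
  show "\<forall>f\<in>?F. x * f \<in> zsp ?F" using assms(2) unfolding Lsp_def by auto
qed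

context
  fixes g :: "'a::field_char_0" and a e :: "nat \<Rightarrow> int" and n :: nat
  assumes g: "g \<noteq> 0" and rel: "(\<Sum>i\<le>n. of_int (a i) * g ^ i) = 0" and esum: "(\<Sum>k\<le>n. e k * a k) = 1"
begin

lemma VV_mult: "VV g a e n * g powi j = (\<Sum>k\<le>n. of_int (e k) * (vv g a k * g powi j))"
  unfolding VV_def sum_distrib_right by (simp add: mult.assoc)

lemma W_mult: "(1 + VV g a e n) * g powi j = (\<Sum>k\<le>n. of_int (e k) * ((vv g a k + of_int (a k)) * g powi j))"
  unfolding one_VV[OF esum] sum_distrib_right by (simp add: mult.assoc)

lemma VV_V1: "0 \<le> j \<Longrightarrow> j \<le> int n + 1 \<Longrightarrow> VV g a e n * g powi j \<in> Lsp g 0 (int n)"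
  unfolding VV_mult by (rule Lsp_sum_int) (auto intro: vv_V1[OF g rel])

lemma VV_neg: "- int n - 1 \<le> j - int n \<Longrightarrow> j \<le> 1 \<Longrightarrow> VV g a e n * g powi j \<in> Lsp g (- int (Suc n)) 0"
  unfolding VV_mult by (rule Lsp_sum_int) (auto intro!: vv_L1[OF g])

lemma g_mul: "g * g powi j = g powi (j + 1)"
  using g by (simp add: power_int_add)

lemma ginv_mul: "inverse g * g powi j = g powi (j - 1)"
  using g by (simp add: power_int_diff field_simps)

lemma W_pos: "0 \<le> j \<Longrightarrow> j \<le> int n \<Longrightarrow> (1 + VV g a e n) * g powi (j - 1) \<in> Lsp g 0 (int n)"
proof -
  assume j: "0 \<le> j" "j \<le> int n"
  show ?thesis unfolding W_mult
  proof (rule Lsp_sum_int, simp, intro ballI)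
    fix k assume k: "k \<in> {..n}"
    show "(vv g a k + of_int (a k)) * g powi (j - 1) \<in> Lsp g 0 (int n)"
    proof (cases "j = 0")
      case True
      then show ?thesis using k by (intro ww_L[OF g rel]) auto
    next
      case False
      have "(vv g a k + of_int (a k)) * g powi (j - 1) = vv g a k * g powi (j - 1) + of_int (a k) * g powi (j - 1)"
        by (simp add: distrib_right)
      moreover have "vv g a k * g powi (j - 1) \<in> Lsp g 0 (int n)" using k j False by (intro vv_V1[OF g rel]) auto
      moreover have "of_int (a k) * g powi (j - 1) \<in> Lsp g 0 (int n)" using j False by (intro Lsp_gen) auto
      ultimately show ?thesis by (simp add: Lsp_add)
    qed
  qed
qed

lemma W_neg: "(1 + VV g a e n) * g powi (- 1) \<in> Lsp g (- int (Suc n)) 0"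
  unfolding W_mult
proof (rule Lsp_sum_int, simp, intro ballI)
  fix k assume k: "k \<in> {..n}"
  have "(vv g a k + of_int (a k)) * g powi (- 1) = vv g a k * g powi (- 1) + of_int (a k) * g powi (- 1)"
    by (simp add: distrib_right)
  moreover have "vv g a k * g powi (- 1) \<in> Lsp g (- int (Suc n)) 0" using k by (intro vv_L1[OF g]) auto
  moreover have "of_int (a k) * g powi (- 1) \<in> Lsp g (- int (Suc n)) 0" by (intro Lsp_gen) auto
  ultimately show "(vv g a k + of_int (a k)) * g powi (- 1) \<in> Lsp g (- int (Suc n)) 0" by (simp add: Lsp_add)
qed

lemma gens_stab: "stab (VV g a e n) \<and> stab (VV g a e n * g) \<and> stab ((1 + VV g a e n) * inverse g)"
proof (intro conjI)
  show "stab (VV g a e n)" by (rule stab_of[OF g]) (rule VV_V1, auto)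
  show "stab (VV g a e n * g)"
  proof (rule stab_of[OF g])
    fix j :: int assume j: "0 \<le> j" "j \<le> int n"
    have e: "VV g a e n * g * g powi j = VV g a e n * g powi (j + 1)" by (simp only: mult.assoc g_mul)
    show "VV g a e n * g * g powi j \<in> Lsp g 0 (int n)" unfolding e by (rule VV_V1) (use j in auto)
  qed
  show "stab ((1 + VV g a e n) * inverse g)"
  proof (rule stab_of[OF g])
    fix j :: int assume j: "0 \<le> j" "j \<le> int n"
    have e: "(1 + VV g a e n) * inverse g * g powi j = (1 + VV g a e n) * g powi (j - 1)" by (simp only: mult.assoc ginv_mul)
    show "(1 + VV g a e n) * inverse g * g powi j \<in> Lsp g 0 (int n)" unfolding e by (rule W_pos[OF j])
  qed
qed

lemma gens_in:
  assumes S: "is_subring S" and b: "b \<in> S" "b * g \<in> S" "(1 - b) * inverse g \<in> S"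
  shows "VV g a e n \<in> S \<and> VV g a e n * g \<in> S \<and> (1 + VV g a e n) * inverse g \<in> S"
proof (intro conjI)
  have P: "x \<in> Lsp g 0 (int n) \<Longrightarrow> x \<in> Lsp g (- int (Suc n)) 0 \<Longrightarrow> x \<in> S" for x
    by (rule Lsp_mem[OF S b, of x "Suc n"]) (auto elim: Lsp_mono[rotated 2])
  show "VV g a e n \<in> S" using P VV_V1[of 0] VV_neg[of 0] by simp
  show "VV g a e n * g \<in> S" using P VV_V1[of 1] VV_neg[of 1] by simp
  have "(1 + VV g a e n) * inverse g = (1 + VV g a e n) * g powi (0 - 1)" by simp
  then show "(1 + VV g a e n) * inverse g \<in> S" using P W_pos[of 0] W_neg by simp
qed

end



definition Cg :: "'a::field set \<Rightarrow> 'a \<Rightarrow> bool" where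
  "Cg S g \<longleftrightarrow> (\<exists>b\<in>S. b * g \<in> S \<and> (1 - b) * inverse g \<in> S)"

lemma sm_sum: assumes "is_submodule S J" "finite A" "\<forall>i\<in>A. f i \<in> J" shows "sum f A \<in> J"
  using assms(2,3) by (induction A rule: finite_induct) (use assms(1) in \<open>auto simp: is_submodule_def\<close>)

lemma sm_smul: "is_submodule S J \<Longrightarrow> s \<in> S \<Longrightarrow> x \<in> J \<Longrightarrow> s * x \<in> J"
  unfolding is_submodule_def by blast

lemma im_prod: "x \<in> I \<Longrightarrow> y \<in> J \<Longrightarrow> x * y \<in> ideal_mult I J"
  unfolding ideal_mult_def by (rule CollectI, rule exI[of _ 1], rule exI[of _ "\<lambda>_. x"], rule exI[of _ "\<lambda>_. y"]) simp

lemma gm_elem: "is_subring S \<Longrightarrow> finite Y \<Longrightarrow> y \<in> Y \<Longrightarrow> s \<in> S \<Longrightarrow> s * y \<in> gen_module S Y"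
  unfolding gen_module_def
proof (rule CollectI, rule exI[of _ "\<lambda>w. if w = y then s else 0"], intro conjI)
  assume "is_subring S" "finite Y" "y \<in> Y" "s \<in> S"
  then show "s * y = (\<Sum>w\<in>Y. (if w = y then s else 0) * w)" by (simp add: if_distrib[of "\<lambda>v. v * _"] sum.delta cong: if_cong)
  show "\<forall>w\<in>Y. (if w = y then s else 0) \<in> S" using \<open>s \<in> S\<close> \<open>is_subring S\<close> sr_0 by auto
qed

lemma P_imp_C:
  assumes S: "is_subring S" and g0: "g \<noteq> 0" and inv: "invertible_ideal S (gen_module S {1, g})"
  shows "Cg S g"
proof (cases "g = 1")
  case True
  then show ?thesis unfolding Cg_def using sr_1[OF S] sr_0[OF S] by (intro bexI[of _ 1]) auto
next
  case g1: False
  let ?I = "gen_module S {1, g}"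
  obtain J where J: "is_submodule S J" "ideal_mult ?I J = S" using inv unfolding invertible_ideal_def by blast
  have "1 \<in> ideal_mult ?I J" using J(2) sr_1[OF S] by simp
  then obtain m :: nat and a' b' where ab: "1 = (\<Sum>i<m. a' i * b' i)" "\<forall>i<m. a' i \<in> ?I \<and> b' i \<in> J"
    unfolding ideal_mult_def mem_Collect_eq by blast
  have "\<forall>i. \<exists>s. i < m \<longrightarrow> (\<forall>y\<in>{1,g}. s y \<in> S) \<and> a' i = s 1 + s g * g"
  proof
    fix i show "\<exists>s. i < m \<longrightarrow> (\<forall>y\<in>{1,g}. s y \<in> S) \<and> a' i = s 1 + s g * g"
    proof (cases "i < m")
      case True
      then obtain s where s: "a' i = (\<Sum>y\<in>{1,g}. s y * y)" "\<forall>y\<in>{1,g}. s y \<in> S"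
        using ab(2) unfolding gen_module_def mem_Collect_eq by blast
      then have "a' i = s 1 + s g * g" using g1 by simp
      then show ?thesis using s(2) by blast
    qed simp
  qed
  then have "\<exists>sf. \<forall>i. i < m \<longrightarrow> (\<forall>y\<in>{1,g}. sf i y \<in> S) \<and> a' i = sf i 1 + sf i g * g" by (rule choice)
  then obtain sf where sf0: "\<And>i. i < m \<Longrightarrow> (\<forall>y\<in>{1,g}. sf i y \<in> S) \<and> a' i = sf i 1 + sf i g * g" by blast
  have sf: "\<And>i. i < m \<Longrightarrow> sf i 1 \<in> S \<and> sf i g \<in> S \<and> a' i = sf i 1 + sf i g * g" using sf0 by simp
  define c1 where "c1 = (\<Sum>i<m. sf i 1 * b' i)"
  define cg where "cg = (\<Sum>i<m. sf i g * b' i)"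
  have c1J: "c1 \<in> J" unfolding c1_def using sf ab(2) by (intro sm_sum[OF J(1)]) (auto intro: sm_smul[OF J(1)])
  have cgJ: "cg \<in> J" unfolding cg_def using sf ab(2) by (intro sm_sum[OF J(1)]) (auto intro: sm_smul[OF J(1)])
  have one: "1 = c1 + g * cg"
  proof -
    have "1 = (\<Sum>i<m. (sf i 1 + sf i g * g) * b' i)" using ab(1) sf by (metis (no_types, lifting) lessThan_iff sum.cong)
    also have "\<dots> = (\<Sum>i<m. sf i 1 * b' i + g * (sf i g * b' i))" by (rule sum.cong) (auto simp: algebra_simps)
    also have "\<dots> = c1 + g * cg" unfolding c1_def cg_def sum.distrib sum_distrib_left ..
    finally show ?thesis .
  qed
  have I1: "1 \<in> ?I" using gm_elem[OF S _ _ sr_1[OF S], of "{1,g}" 1] by simp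
  have Ig: "g \<in> ?I" using gm_elem[OF S _ _ sr_1[OF S], of "{1,g}" g] by simp
  have "c1 \<in> S" using im_prod[OF I1 c1J] J(2) by simp
  moreover have "c1 * g \<in> S" using im_prod[OF Ig c1J] J(2) by (simp add: mult.commute)
  moreover have "(1 - c1) * inverse g \<in> S"
  proof -
    have "(1 - c1) * inverse g = cg" using one g0 by (simp add: field_simps)
    then show ?thesis using im_prod[OF I1 cgJ] J(2) by simp
  qed
  ultimately show ?thesis unfolding Cg_def by blast
qed

lemma C_coeffs:
  assumes S: "is_subring S" and G: "mult_subgroup G" and C: "\<forall>g\<in>G. Cg S g"
    and Y: "finite Y" "Y \<noteq> {}" "Y \<subseteq> G"
  shows "\<exists>c. (\<Sum>y\<in>Y. c y * y) = 1 \<and> (\<forall>y\<in>Y. \<forall>y'\<in>Y. c y * y' \<in> S)"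
  using Y
proof (induction Y rule: finite_ne_induct)
  case (singleton y)
  then have "y \<noteq> 0" using G unfolding mult_subgroup_def by auto
  then show ?case using sr_1[OF S] by (intro exI[of _ "\<lambda>_. inverse y"]) simp
next
  case (insert z Y)
  obtain c where c: "(\<Sum>y\<in>Y. c y * y) = 1" "\<forall>y\<in>Y. \<forall>y'\<in>Y. c y * y' \<in> S" using insert by blast
  have nz: "w \<noteq> 0" if "w \<in> G" for w using that G unfolding mult_subgroup_def by auto
  have zG: "z \<in> G" using insert by simp
  have zyG: "z * inverse y \<in> G" if "y \<in> Y" for y
    using G that insert.prems zG unfolding mult_subgroup_def by auto
  have "\<forall>y. \<exists>b. y \<in> Y \<longrightarrow> b \<in> S \<and> b * (z * inverse y) \<in> S \<and> (1 - b) * inverse (z * inverse y) \<in> S"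
    using C zyG unfolding Cg_def by blast
  then obtain al where al: "\<And>y. y \<in> Y \<Longrightarrow> al y \<in> S \<and> al y * (z * inverse y) \<in> S \<and> (1 - al y) * (y * inverse z) \<in> S"
    by (metis inverse_mult_distrib inverse_inverse_eq mult.commute)
  define dz where "dz = (\<Sum>y\<in>Y. c y * (1 - al y) * y * inverse z)"
  define c' where "c' w = (if w = z then dz else c w * al w)" for w
  have z0: "z \<noteq> 0" using nz zG by blast
  have yne: "y \<noteq> 0" if "y \<in> Y" for y using nz insert.prems that by auto
  show ?case
  proof (intro exI[of _ c'] conjI ballI)
    have "(\<Sum>w\<in>insert z Y. c' w * w) = dz * z + (\<Sum>y\<in>Y. c y * al y * y)"
      using insert.hyps unfolding c'_def by (simp add: sum.insert) (rule sum.cong, auto)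
    also have "dz * z = (\<Sum>y\<in>Y. c y * (1 - al y) * y)"
      unfolding dz_def sum_distrib_right using z0 by (rule_tac sum.cong) auto
    finally have "(\<Sum>w\<in>insert z Y. c' w * w) = (\<Sum>y\<in>Y. c y * (1 - al y) * y + c y * al y * y)"
      by (simp add: sum.distrib)
    also have "\<dots> = (\<Sum>y\<in>Y. c y * y)" by (rule sum.cong) (auto simp: algebra_simps)
    finally show "(\<Sum>w\<in>insert z Y. c' w * w) = 1" using c(1) by simp
  next
    fix w w' assume w: "w \<in> insert z Y" and w': "w' \<in> insert z Y"
    show "c' w * w' \<in> S"
    proof (cases "w = z")
      case True
      then have cw: "c' w * w' = (\<Sum>y\<in>Y. c y * (1 - al y) * y * inverse z * w')" unfolding c'_def dz_def
        using insert.hyps by (simp add: sum_distrib_right)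
      show ?thesis unfolding cw
      proof (rule sr_sum[OF S], intro ballI)
        fix y assume y: "y \<in> Y"
        show "c y * (1 - al y) * y * inverse z * w' \<in> S"
        proof (cases "w' = z")
          case True
          have "c y * (1 - al y) * y * inverse z * w' = (c y * y) * (1 - al y)" using True z0 by simp
          then show ?thesis using c(2) y al[OF y] S by (metis sr_1 sr_diff sr_mult)
        next
          case False
          then have "w' \<in> Y" using w' by simp
          have "c y * (1 - al y) * y * inverse z * w' = (c y * w') * ((1 - al y) * (y * inverse z))" by (simp add: ac_simps)
          then show ?thesis using c(2) y al[OF y] S \<open>w' \<in> Y\<close> by (metis sr_mult)
        qed
      qed
    next
      case False
      then have wY: "w \<in> Y" using w by simp
      have cw: "c' w = c w * al w" unfolding c'_def using False by simp
      show ?thesis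
      proof (cases "w' = z")
        case True
        have "c' w * w' = (c w * w) * (al w * (z * inverse w))" unfolding cw True using yne[OF wY] by (simp add: field_simps)
        then show ?thesis using c(2) wY al[OF wY] S by (metis sr_mult)
      next
        case False
        then have "w' \<in> Y" using w' by simp
        have "c' w * w' = (c w * w') * al w" unfolding cw by (simp add: ac_simps)
        then show ?thesis using c(2) wY al[OF wY] S \<open>w' \<in> Y\<close> by (metis sr_mult)
      qed
    qed
  qed
qed

lemma C_imp_P:
  assumes S: "is_subring S" and G: "mult_subgroup G" and C: "\<forall>g\<in>G. Cg S g"
    and Y: "finite Y" "Y \<noteq> {}" "Y \<subseteq> G"
  shows "invertible_ideal S (gen_module S Y)"
proof -
  obtain c where c: "(\<Sum>y\<in>Y. c y * y) = 1" "\<forall>y\<in>Y. \<forall>y'\<in>Y. c y * y' \<in> S"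
    using C_coeffs[OF S G C Y] by blast
  let ?I = "gen_module S Y"
  define J where "J = {x. \<forall>y\<in>Y. x * y \<in> S}"
  have smI: "is_submodule S ?I" unfolding is_submodule_def
  proof (intro conjI ballI)
    show "0 \<in> ?I" unfolding gen_module_def using sr_0[OF S] by (intro CollectI exI[of _ "\<lambda>_. 0"]) simp
  next
    fix x y assume "x \<in> ?I" "y \<in> ?I"
    then obtain s t where st: "x = (\<Sum>w\<in>Y. s w * w)" "\<forall>w\<in>Y. s w \<in> S" "y = (\<Sum>w\<in>Y. t w * w)" "\<forall>w\<in>Y. t w \<in> S"
      unfolding gen_module_def mem_Collect_eq by blast
    have "x + y = (\<Sum>w\<in>Y. (s w + t w) * w)" using st by (simp add: distrib_right sum.distrib)
    moreover have "\<forall>w\<in>Y. s w + t w \<in> S" using st S by (simp add: sr_add)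
    ultimately show "x + y \<in> ?I" unfolding gen_module_def mem_Collect_eq
      by (intro exI[of _ "\<lambda>w. s w + t w"] conjI) simp_all
  next
    fix r x assume "r \<in> S" "x \<in> ?I"
    then obtain s where st: "x = (\<Sum>w\<in>Y. s w * w)" "\<forall>w\<in>Y. s w \<in> S" unfolding gen_module_def mem_Collect_eq by blast
    have "r * x = (\<Sum>w\<in>Y. (r * s w) * w)" using st by (simp add: sum_distrib_left mult.assoc)
    moreover have "\<forall>w\<in>Y. r * s w \<in> S" using st S \<open>r \<in> S\<close> by (simp add: sr_mult)
    ultimately show "r * x \<in> ?I" unfolding gen_module_def mem_Collect_eq
      by (intro exI[of _ "\<lambda>w. r * s w"] conjI) simp_all
  qed
  have smJ: "is_submodule S J" unfolding is_submodule_def J_def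
    using S by (auto simp: sr_0 sr_add distrib_right mult.assoc sr_mult)
  have "ideal_mult ?I J = S"
  proof
    show "ideal_mult ?I J \<subseteq> S"
    proof
      fix x assume "x \<in> ideal_mult ?I J"
      then obtain m :: nat and a b where ab: "x = (\<Sum>i<m. a i * b i)" "\<forall>i<m. a i \<in> ?I \<and> b i \<in> J"
        unfolding ideal_mult_def mem_Collect_eq by blast
      have "a i * b i \<in> S" if i: "i < m" for i
      proof -
        obtain s where s: "a i = (\<Sum>w\<in>Y. s w * w)" "\<forall>w\<in>Y. s w \<in> S" using ab(2) i unfolding gen_module_def mem_Collect_eq by blast
        have "a i * b i = (\<Sum>w\<in>Y. s w * (w * b i))" unfolding s(1) sum_distrib_right by (simp add: ac_simps)
        also have "\<dots> \<in> S"
        proof (rule sr_sum[OF S], rule ballI)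
          fix w assume w: "w \<in> Y"
          have "w * b i \<in> S" using ab(2) i w unfolding J_def by (auto simp: mult.commute)
          then show "s w * (w * b i) \<in> S" using s(2) w by (metis sr_mult[OF S])
        qed
        finally show ?thesis .
      qed
      then show "x \<in> S" unfolding ab(1) using S by (intro sr_sum) auto
    qed
  next
    show "S \<subseteq> ideal_mult ?I J"
    proof
      fix x assume x: "x \<in> S"
      obtain h where h: "bij_betw h {0..<card Y} Y" using ex_bij_betw_nat_finite[OF Y(1)] by blast
      have h': "bij_betw h {..<card Y} Y" using h by (simp add: atLeast0LessThan)
      have "x = x * (\<Sum>y\<in>Y. c y * y)" using c(1) by simp
      also have "\<dots> = (\<Sum>y\<in>Y. (x * y) * c y)" by (simp add: sum_distrib_left ac_simps)
      also have "\<dots> = (\<Sum>i<card Y. (x * h i) * c (h i))"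
        using sum.reindex_bij_betw[OF h', of "\<lambda>y. (x * y) * c y"] by simp
      finally have xe: "x = (\<Sum>i<card Y. (x * h i) * c (h i))" .
      have "\<forall>i<card Y. x * h i \<in> ?I \<and> c (h i) \<in> J"
      proof (intro allI impI conjI)
        fix i assume i: "i < card Y"
        then have hi: "h i \<in> Y" using h' bij_betwE by blast
        show "x * h i \<in> ?I" by (rule gm_elem[OF S Y(1) hi x])
        show "c (h i) \<in> J" unfolding J_def using c(2) hi by blast
      qed
      then show "x \<in> ideal_mult ?I J" unfolding ideal_mult_def mem_Collect_eq using xe
        by (intro exI[of _ "card Y"] exI[of _ "\<lambda>i. x * h i"] exI[of _ "\<lambda>i. c (h i)"] conjI) simp_all
    qed
  qed
  then show ?thesis unfolding invertible_ideal_def using smI smJ by blast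
qed



lemma stab_multiple:
  fixes c :: "nat \<Rightarrow> 'a::field_char_0" and g :: 'a
  assumes c: "qbasis c n" and g: "g \<noteq> 0"
  shows "\<exists>k::int. k \<noteq> 0 \<and> stab (of_int k * g)"
proof -
  obtain N a where rel: "(\<Sum>i\<le>N. of_int (a i) * g ^ i) = 0" and aN: "a N \<noteq> 0"
    using alg_rel[OF c, of g] by blast
  have N1: "N \<ge> 1"
  proof (rule ccontr)
    assume "\<not> N \<ge> 1"
    then have "N = 0" by simp
    then show False using rel aN by simp
  qed
  have st: "stab (vv g a (N - 1))"
    by (rule stab_of[OF g, where n=N]) (rule vv_V1[OF g rel], auto)
  have iv: "{N - 1<..N} = {N}" using N1 by auto
  have "(vv g a (N - 1) + of_int (a (N - 1))) * g powi 0 = - (of_int (a N) * g)"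
    using ww_alt[OF g rel, of "N - 1" 0] N1 iv by simp
  then have "of_int (a N) * g = - (vv g a (N - 1) + of_int (a (N - 1)))" by simp
  moreover have "stab (- (vv g a (N - 1) + of_int (a (N - 1))))"
    by (intro stab_neg stab_add st stab_int)
  ultimately show ?thesis using aN by metis
qed

lemma stab_basis:
  assumes "number_field TYPE('a::field_char_0)"
  shows "\<exists>(c :: nat \<Rightarrow> 'a) n. qbasis c n \<and> (\<forall>i<n. stab (c i))"
proof -
  obtain c0 :: "nat \<Rightarrow> 'a" and n where c0: "qbasis c0 n" using nf_basis[OF assms] by blast
  have nz: "c0 i \<noteq> 0" if "i < n" for i
  proof
    assume z: "c0 i = 0"
    have "qlin (\<lambda>j. if j = i then 1 else 0) c0 n = c0 i"
      unfolding qlin_def using that by (simp add: if_distrib[of "\<lambda>v. of_rat v * _"] sum.delta cong: if_cong)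
    then have "qlin (\<lambda>j. if j = i then 1 else 0) c0 n = 0" using z by simp
    then have "\<forall>j<n. (if j = i then 1 else 0 :: rat) = 0" using c0 unfolding qbasis_def by blast
    then show False using that by auto
  qed
  have "\<forall>i. \<exists>k::int. i < n \<longrightarrow> k \<noteq> 0 \<and> stab (of_int k * c0 i)"
    using stab_multiple[OF c0] nz by blast
  then obtain k where k: "\<And>i. i < n \<Longrightarrow> k i \<noteq> 0 \<and> stab (of_int (k i) * c0 i)" by metis
  define c where "c i = of_int (k i) * c0 i" for i
  have "qbasis c n" unfolding qbasis_def
  proof (intro conjI allI impI)
    fix x
    obtain q where q: "x = qlin q c0 n" using c0 unfolding qbasis_def by blast
    have "qlin q c0 n = qlin (\<lambda>i. q i / of_int (k i)) c n"
      unfolding qlin_def c_def by (rule sum.cong) (auto simp: k of_rat_divide)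
    then show "\<exists>q. x = qlin q c n" using q by blast
  next
    fix q i assume q: "qlin q c n = 0" and i: "i < n"
    have "qlin q c n = qlin (\<lambda>i. q i * of_int (k i)) c0 n"
      unfolding qlin_def c_def by (rule sum.cong) (auto simp: of_rat_mult)
    then have "q i * of_int (k i) = 0" using q c0 i unfolding qbasis_def by metis
    then show "q i = 0" using k[OF i] by simp
  qed
  moreover have "\<forall>i<n. stab (c i)" using k unfolding c_def by blast
  ultimately show ?thesis by blast
qed

theorem theorem4p70:
  fixes G :: "'a::field_char_0 set"
  assumes "number_field TYPE('a)"
    and "mult_subgroup G"
  defines "P \<equiv> \<lambda>S. is_subring S \<and>
             (\<forall>Y. finite Y \<and> Y \<noteq> {} \<and> Y \<subseteq> G \<longrightarrow> invertible_ideal S (gen_module S Y))"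
  shows "\<exists>S. (P S \<and> (\<forall>T. P T \<and> T \<subseteq> S \<longrightarrow> T = S)) \<and>
             (\<forall>S'. P S' \<and> (\<forall>T. P T \<and> T \<subseteq> S' \<longrightarrow> T = S') \<longrightarrow> S' = S) \<and>
             is_order S"
proof -
  note G = assms(2)
  obtain c :: "nat \<Rightarrow> 'a" and n where c: "qbasis c n" and cst: "\<forall>i<n. stab (c i)"
    using stab_basis[OF assms(1)] by blast
  have nzG: "g \<noteq> 0" if "g \<in> G" for g using G that unfolding mult_subgroup_def by auto
  have "\<forall>g::'a. \<exists>t. (\<Sum>i\<le>fst t. of_int (fst (snd t) i) * g ^ i) = 0 \<and> (\<Sum>i\<le>fst t. snd (snd t) i * fst (snd t) i) = 1"
  proof
    fix g :: 'a
    obtain N a e where "(\<Sum>i\<le>N. of_int (a i) * g ^ i) = 0" "(\<Sum>i\<le>N. e i * a i) = 1"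
      using alg_rel[OF c, of g] by blast
    then show "\<exists>t. (\<Sum>i\<le>fst t. of_int (fst (snd t) i) * g ^ i) = 0 \<and> (\<Sum>i\<le>fst t. snd (snd t) i * fst (snd t) i) = 1"
      by (intro exI[of _ "(N, a, e)"]) simp
  qed
  then have "\<exists>T. \<forall>g::'a. (\<Sum>i\<le>fst (T g). of_int (fst (snd (T g)) i) * g ^ i) = 0 \<and> (\<Sum>i\<le>fst (T g). snd (snd (T g)) i * fst (snd (T g)) i) = 1"
    by (rule choice)
  then obtain T where T: "\<And>g::'a. (\<Sum>i\<le>fst (T g). of_int (fst (snd (T g)) i) * g ^ i) = 0"
      "\<And>g. (\<Sum>i\<le>fst (T g). snd (snd (T g)) i * fst (snd (T g)) i) = 1"
    by blast
  define Nf where "Nf g = fst (T g)" for g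
  define af where "af g = fst (snd (T g))" for g
  define ef where "ef g = snd (snd (T g))" for g
  have rel: "(\<Sum>i\<le>Nf g. of_int (af g i) * g ^ i) = 0" for g using T(1) unfolding Nf_def af_def by simp
  have esum: "(\<Sum>i\<le>Nf g. ef g i * af g i) = 1" for g using T(2) unfolding Nf_def af_def ef_def by simp
  define V where "V g = VV g (af g) (ef g) (Nf g)" for g
  define X where "X = (\<Union>g\<in>G. {V g, V g * g, (1 + V g) * inverse g})"
  define S0 where "S0 = \<Inter>{S. is_subring S \<and> X \<subseteq> S}"
  have S0sub: "is_subring S0" unfolding S0_def is_subring_def by auto
  have XS0: "X \<subseteq> S0" unfolding S0_def by auto
  have least: "S0 \<subseteq> S" if PS: "P S" for S
  proof -
    have S: "is_subring S" using PS unfolding P_def by blast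
    have "X \<subseteq> S"
    proof
      fix x assume "x \<in> X"
      then obtain g where g: "g \<in> G" "x \<in> {V g, V g * g, (1 + V g) * inverse g}" unfolding X_def by blast
      have "1 \<in> G" using G unfolding mult_subgroup_def by blast
      then have "invertible_ideal S (gen_module S {1, g})" using PS g(1) unfolding P_def by auto
      then have "Cg S g" by (rule P_imp_C[OF S nzG[OF g(1)]])
      then obtain b where b: "b \<in> S" "b * g \<in> S" "(1 - b) * inverse g \<in> S" unfolding Cg_def by blast
      show "x \<in> S" using gens_in[OF nzG[OF g(1)] rel esum S b] g(2) unfolding V_def by auto
    qed
    then show ?thesis unfolding S0_def using S by blast
  qed
  have PS0: "P S0"
  proof -
    have "\<forall>g\<in>G. Cg S0 g"
    proof
      fix g assume g: "g \<in> G"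
      have m: "V g \<in> S0" "V g * g \<in> S0" "(1 + V g) * inverse g \<in> S0" using XS0 g unfolding X_def by auto
      show "Cg S0 g" unfolding Cg_def
      proof (intro bexI[of _ "- V g"] conjI)
        show "- V g \<in> S0" using m(1) sr_neg[OF S0sub] by blast
        show "- V g * g \<in> S0" using m(2) sr_neg[OF S0sub] by fastforce
        show "(1 - - V g) * inverse g \<in> S0" using m(3) by simp
      qed
    qed
    then show ?thesis unfolding P_def using S0sub C_imp_P[OF S0sub G] by blast
  qed
  have stabS0: "stab x" if "x \<in> S0" for x
  proof -
    define R where "R = {y::'a. stab y}"
    have "is_subring R" unfolding is_subring_def R_def
      using stab_int[of 0] stab_int[of 1] by (auto intro: stab_add stab_mult stab_neg)
    moreover have "X \<subseteq> R"
    proof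
      fix x assume "x \<in> X"
      then obtain g where g: "g \<in> G" "x \<in> {V g, V g * g, (1 + V g) * inverse g}" unfolding X_def by blast
      show "x \<in> R" using gens_stab[OF nzG[OF g(1)] rel esum] g(2) unfolding V_def R_def by auto
    qed
    ultimately have "S0 \<subseteq> R" unfolding S0_def by blast
    then show ?thesis using that unfolding R_def by blast
  qed
  have ord: "is_order S0"
  proof -
    obtain D where D: "D > 0" "\<forall>x. (\<forall>j<n. tr c n (x * c j) \<in> \<int>) \<longrightarrow> of_int D * x \<in> range (\<lambda>z. zlin z c n)"
      using dual_bound[OF c] by blast
    have DS: "\<forall>x\<in>S0. of_int D * x \<in> range (\<lambda>z. zlin z c n)"
    proof
      fix x assume x: "x \<in> S0"
      have "tr c n (x * c j) \<in> \<int>" if "j < n" for j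
        using stab_tr_int[OF c stab_mult[OF stabS0[OF x] cst[rule_format, OF that]]] .
      then show "of_int D * x \<in> range (\<lambda>z. zlin z c n)" using D(2) by blast
    qed
    have "addsub S0" unfolding addsub_def using S0sub unfolding is_subring_def by blast
    then obtain m e where e: "\<forall>i<m. e i \<in> S0" "zindep e m" "S0 \<subseteq> range (\<lambda>z. zlin z e m)"
      using scaled_free[OF qbasis_zindep[OF c] _ _ DS] D(1) by fastforce
    show ?thesis unfolding is_order_def
    proof (intro conjI exI[of _ m] exI[of _ e] ballI)
      show "is_subring S0" by fact
      show "\<forall>i<m. e i \<in> S0" by fact
      fix x assume "x \<in> S0"
      then obtain z where z: "x = zlin z e m" using e(3) by blast
      let ?z = "\<lambda>i. if i < m then z i else 0"
      show "\<exists>!c. (\<forall>i\<ge>m. c i = 0) \<and> x = (\<Sum>i<m. of_int (c i) * e i)"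
      proof (rule ex1I[of _ ?z])
        have "zlin z e m = zlin ?z e m" by (rule zlin_cong) auto
        then have "x = zlin ?z e m" using z by (simp only:)
        then show "(\<forall>i\<ge>m. ?z i = 0) \<and> x = (\<Sum>i<m. of_int (?z i) * e i)" unfolding zlin_def by (intro conjI) auto
      next
        fix c' assume c': "(\<forall>i\<ge>m. c' i = 0) \<and> x = (\<Sum>i<m. of_int (c' i) * e i)"
        have "zlin z e m = zlin ?z e m" by (rule zlin_cong) auto
        moreover have "x = zlin c' e m" using c' unfolding zlin_def by blast
        ultimately have eq: "zlin c' e m = zlin ?z e m" using z by (simp only:)
        show "c' = ?z"
        proof
          fix i show "c' i = ?z i"
          proof (cases "i < m")
            case True then show ?thesis using zindep_unique[OF e(2) eq True] by simp
          next
            case False then show ?thesis using c' by simp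
          qed
        qed
      qed
    qed
  qed
  show ?thesis
  proof (intro exI[of _ S0] conjI allI impI)
    show "P S0" by fact
    fix T assume "P T \<and> T \<subseteq> S0"
    then show "T = S0" using least by blast
  next
    fix S' assume S': "P S' \<and> (\<forall>T. P T \<and> T \<subseteq> S' \<longrightarrow> T = S')"
    then show "S' = S0" using least[of S'] PS0 by blast
  next
    show "is_order S0" by fact
  qed
qed


end
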